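(* Let $f$ be a nonconstant harmonic function on $K$. Then the derivative of the restriction of $f$ to $[p_1,p_2]$ exists and is infinite ($+\infty$ or $-\infty$) at all junction points of $[p_1,p_2]$ with at most one exception (one-sided derivatives at the endpoints $p_1,p_2$). Moreover, on the whole contour $[p_0,p_1]\cup[p_0,p_2]\cup[p_1,p_2]$ of $G_0$ there is at most one junction point $x$ for which it fails that, for every edge $E$ of $G_0$ containing $x$, the derivative of $f|_E$ at $x$ (one-sided if $x$ is an endpoint of $E$) exists and is infinite; in particular the derivative of a restriction can vanish at no more than one junction point of the contour.
   Context: Let $p_0,p_1,p_2$ be the vertices of a unit equilateral triangle in $\mathbb{R}^2$, $F_i(x)=(x+p_i)/2$, and $K$ the Sierpinski gasket (the attractor of $F_0,F_1,F_2$). For words $w$ of length $m$, $F_w$ is the composition $F_{w_1}\circ\cdots\circ F_{w_m}$; the minimal triangles of the graph $G_m$ are the triangles with vertices $F_w(p_0),F_w(p_1),F_w(p_2)$, and $V_m$ is the set of all these vertices. Junction points are the points of $\bigcup_m V_m$; on an edge $[p_i,p_j]$ parametrized by $t\mapsto p_i+t(p_j-p_i)$, $t\in[0,1]$, these are exactly the points with dyadic rational $t$. A continuous $f:K\to\mathbb{R}$ is harmonic if for every $m\ge0$ and every minimal triangle of $G_m$ with vertices $v_i,v_j,v_k$, the value at the midpoint $v_{ij}$ of $[v_i,v_j]$ is $\frac15(2f(v_i)+2f(v_j)+f(v_k))$. Restrictions to edges are viewed as functions of the linear parameter $t\in[0,1]$. *)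

theory Defs
  imports "HOL-Analysis.Analysis"
begin

text \<open>Points of the plane are complex numbers. The vertices of the triangle are
  p 0, p 1, p 2 (a function on nat, only indices below 3 matter).\<close>

definition unit_equilateral :: "(nat \<Rightarrow> complex) \<Rightarrow> bool" where
  "unit_equilateral p \<longleftrightarrow> (\<forall>i<3. \<forall>j<3. i \<noteq> j \<longrightarrow> dist (p i) (p j) = 1)"

definition SG_map :: "(nat \<Rightarrow> complex) \<Rightarrow> nat \<Rightarrow> complex \<Rightarrow> complex" where
  "SG_map p i x = (x + p i) / 2"

definition SG_word :: "(nat \<Rightarrow> complex) \<Rightarrow> nat list \<Rightarrow> complex \<Rightarrow> complex" where
  "SG_word p w = foldr (\<lambda>i g. SG_map p i \<circ> g) w id"

definition SG_words :: "nat \<Rightarrow> nat list set" where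
  "SG_words m = {w. length w = m \<and> set w \<subseteq> {0,1,2}}"

definition SG :: "(nat \<Rightarrow> complex) \<Rightarrow> complex set" where
  "SG p = (THE K. compact K \<and> K \<noteq> {} \<and> K = (\<Union>i\<in>{0,1,2}. SG_map p i ` K))"

definition SG_V :: "(nat \<Rightarrow> complex) \<Rightarrow> nat \<Rightarrow> complex set" where
  "SG_V p m = {SG_word p w (p j) | w j. w \<in> SG_words m \<and> j < 3}"

definition SG_harmonic :: "(nat \<Rightarrow> complex) \<Rightarrow> (complex \<Rightarrow> real) \<Rightarrow> bool" where
  "SG_harmonic p f \<longleftrightarrow> continuous_on (SG p) f \<and>
     (\<forall>m. \<forall>w\<in>SG_words m. \<forall>i j k. {i, j, k} = {0,1,2::nat} \<longrightarrow>
        f ((SG_word p w (p i) + SG_word p w (p j)) / 2)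
          = (2 * f (SG_word p w (p i)) + 2 * f (SG_word p w (p j)) + f (SG_word p w (p k))) / 5)"

definition dyadic :: "real \<Rightarrow> bool" where
  "dyadic t \<longleftrightarrow> (\<exists>k::int. \<exists>n::nat. t = of_int k / 2 ^ n)"

definition edge_restr :: "(nat \<Rightarrow> complex) \<Rightarrow> (complex \<Rightarrow> real) \<Rightarrow> nat \<Rightarrow> nat \<Rightarrow> real \<Rightarrow> real" where
  "edge_restr p f i j t = f (p i + of_real t * (p j - p i))"

text \<open>The derivative of g on [0,1] at t exists and equals +infinity or -infinity
  (one-sided at the endpoints, since the limit is taken within [0,1]).\<close>
definition infinite_deriv :: "(real \<Rightarrow> real) \<Rightarrow> real \<Rightarrow> bool" where
  "infinite_deriv g t \<longleftrightarrow>
     filterlim (\<lambda>s. (g s - g t) / (s - t)) at_top (at t within {0..1}) \<or>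
     filterlim (\<lambda>s. (g s - g t) / (s - t)) at_bot (at t within {0..1})"

definition contour_junctions :: "(nat \<Rightarrow> complex) \<Rightarrow> complex set" where
  "contour_junctions p = {p i + of_real t * (p j - p i) | i j t.
      i < j \<and> j < 3 \<and> t \<in> {0..1} \<and> dyadic t}"

definition good_point :: "(nat \<Rightarrow> complex) \<Rightarrow> (complex \<Rightarrow> real) \<Rightarrow> complex \<Rightarrow> bool" where
  "good_point p f x \<longleftrightarrow> (\<forall>i j t. i < j \<and> j < 3 \<and> t \<in> {0..1} \<and> x = p i + of_real t * (p j - p i)
       \<longrightarrow> infinite_deriv (edge_restr p f i j) t)"

end

theory Submission
  imports Defs
begin


definition cL :: "real \<times> real \<times> real \<Rightarrow> real \<times> real \<times> real" where
  "cL d = (case d of (x,y,z) \<Rightarrow> (x, (2*x+2*y+z)/5, (2*x+2*z+y)/5))"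
definition cR :: "real \<times> real \<times> real \<Rightarrow> real \<times> real \<times> real" where
  "cR d = (case d of (x,y,z) \<Rightarrow> ((2*x+2*y+z)/5, y, (2*y+2*z+x)/5))"
definition al :: "real \<times> real \<times> real \<Rightarrow> real" where
  "al d = (case d of (x,y,z) \<Rightarrow> z+y-2*x)"
definition ar :: "real \<times> real \<times> real \<Rightarrow> real" where
  "ar d = (case d of (x,y,z) \<Rightarrow> z+x-2*y)"
definition be :: "real \<times> real \<times> real \<Rightarrow> real" where
  "be d = (case d of (x,y,z) \<Rightarrow> z-y)"
definition ncst :: "real \<times> real \<times> real \<Rightarrow> bool" where
  "ncst d = (case d of (x,y,z) \<Rightarrow> \<not>(x = y \<and> y = z))"

fun cellN :: "nat \<Rightarrow> nat \<Rightarrow> real \<times> real \<times> real \<Rightarrow> real \<times> real \<times> real" where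
  "cellN 0 k d = d"
| "cellN (Suc n) k d = (if k < 2^n then cellN n k (cL d) else cellN n (k - 2^n) (cR d))"

definition Fail :: "nat \<Rightarrow> nat \<Rightarrow> real \<times> real \<times> real \<Rightarrow> bool" where
  "Fail n k d = (if k < 2^n then al (cellN n k d) = 0 else ar (cellN n (k - 1) d) = 0)"

lemma al_cL[simp]: "al (cL d) = 3/5 * al d" by (cases d) (auto simp: al_def cL_def field_simps)
lemma ar_cR[simp]: "ar (cR d) = 3/5 * ar d" by (cases d) (auto simp: ar_def cR_def field_simps)
lemma be_cL[simp]: "be (cL d) = 1/5 * be d" by (cases d) (auto simp: be_def cL_def field_simps)
lemma fst_cL[simp]: "fst (cL d) = fst d" by (cases d) (auto simp: cL_def)
lemma ar_cL_al_cR: "ar (cL d) = - al (cR d)" by (cases d) (auto simp: ar_def al_def cL_def cR_def field_simps)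
lemma ncst_cL: "ncst d \<Longrightarrow> ncst (cL d)" by (cases d) (auto simp: ncst_def cL_def field_simps)
lemma ncst_cR: "ncst d \<Longrightarrow> ncst (cR d)" by (cases d) (auto simp: ncst_def cR_def field_simps)

lemma cellN_0: "al (cellN n 0 d) = (3/5)^n * al d \<and> be (cellN n 0 d) = (1/5)^n * be d \<and> fst (cellN n 0 d) = fst d"
  by (induction n arbitrary: d) auto

lemma cellN_last: "ar (cellN n (2^n - 1) d) = (3/5)^n * ar d"
proof (induction n arbitrary: d)
  case 0 then show ?case by simp
next
  case (Suc n)
  have "\<not> (2::nat)^Suc n - 1 < 2^n" by simp
  moreover have "(2::nat)^Suc n - 1 - 2^n = 2^n - 1" by simp
  ultimately show ?case using Suc by simp
qed

lemma cellN_children: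
  "k < 2^n \<Longrightarrow> cellN (Suc n) (2*k) d = cL (cellN n k d) \<and> cellN (Suc n) (2*k+1) d = cR (cellN n k d)"
proof (induction n arbitrary: k d)
  case 0 then show ?case by simp
next
  case (Suc n)
  show ?case
  proof (cases "k < 2^n")
    case True
    then show ?thesis using Suc.IH[of k "cL d"] by simp
  next
    case False
    have a: "2*k - 2^Suc n = 2*(k-2^n)" "2*k+1 - 2^Suc n = 2*(k-2^n)+1" using False by auto
    have "k - 2^n < 2^n" using Suc.prems False by simp
    then show ?thesis using Suc.IH[of "k-2^n" "cR d"] False a by simp
  qed
qed

lemma cellN_adj: "0 < k \<Longrightarrow> k < 2^n \<Longrightarrow> ar (cellN n (k-1) d) = - al (cellN n k d)"
proof (induction n arbitrary: k d)
  case 0 then show ?case by simp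
next
  case (Suc n)
  consider "k < 2^n" | "k = 2^n" | "k > 2^n" by linarith
  then show ?case
  proof cases
    case 1
    then have "k - 1 < 2^n" by simp
    then show ?thesis using Suc 1 by simp
  next
    case 2
    have "ar (cellN (Suc n) (k-1) d) = ar (cellN n (2^n - 1) (cL d))" using 2 by simp
    also have "\<dots> = (3/5)^n * ar (cL d)" by (rule cellN_last)
    also have "\<dots> = - ((3/5)^n * al (cR d))" by (simp add: ar_cL_al_cR)
    also have "\<dots> = - al (cellN (Suc n) k d)" using 2 cellN_0[of n "cR d"] by simp
    finally show ?thesis .
  next
    case 3
    have e: "k - 1 - 2^n = (k - 2^n) - 1" by simp
    have "0 < k - 2^n" "k - 2^n < 2^n" using 3 Suc.prems by auto
    moreover have "\<not> k - 1 < 2^n" using 3 by simp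
    ultimately show ?thesis using Suc.IH[of "k - 2^n" "cR d"] 3 e by simp
  qed
qed



lemma Fail_0: "Fail n 0 d \<longleftrightarrow> al d = 0"
  using cellN_0[of n d] by (simp add: Fail_def)

lemma Fail_last: "Fail n (2^n) d \<longleftrightarrow> ar d = 0"
  using cellN_last[of n d] by (simp add: Fail_def)

lemma ar_cL: "ar (cL d) = 3/5 * (fst d - fst (snd d))"
  by (cases d) (auto simp: ar_def cL_def field_simps)
lemma al_cR: "al (cR d) = 3/5 * (fst (snd d) - fst d)"
  by (cases d) (auto simp: al_def cR_def field_simps)
lemma ar_al: "ar d = al d + 3 * (fst d - fst (snd d))"
  by (cases d) (auto simp: al_def ar_def field_simps)

lemma Fail_L: "k \<le> 2^n \<Longrightarrow> Fail (Suc n) k d \<longleftrightarrow> Fail n k (cL d)"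
proof (cases "k < 2^n")
  case True then show ?thesis by (simp add: Fail_def)
next
  case False
  assume "k \<le> 2^n"
  then have k: "k = 2^n" using False by simp
  have "Fail (Suc n) k d \<longleftrightarrow> al (cellN n 0 (cR d)) = 0" using k by (simp add: Fail_def)
  also have "\<dots> \<longleftrightarrow> al (cR d) = 0" using cellN_0[of n "cR d"] by simp
  also have "\<dots> \<longleftrightarrow> ar (cL d) = 0" by (simp add: ar_cL_al_cR)
  also have "\<dots> \<longleftrightarrow> Fail n k (cL d)" using k Fail_last by simp
  finally show ?thesis .
qed

lemma Fail_R: "2^n \<le> k \<Longrightarrow> k \<le> 2^Suc n \<Longrightarrow> Fail (Suc n) k d \<longleftrightarrow> Fail n (k - 2^n) (cR d)"
proof -
  assume a: "2^n \<le> k" "k \<le> 2^Suc n"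
  consider "k = 2^n" | "2^n < k \<and> k < 2^Suc n" | "k = 2^Suc n" using a by linarith
  then show ?thesis
  proof cases
    case 1
    have "Fail (Suc n) k d \<longleftrightarrow> al (cellN n 0 (cR d)) = 0" using 1 by (simp add: Fail_def)
    also have "\<dots> \<longleftrightarrow> Fail n (k - 2^n) (cR d)" using 1 by (simp add: Fail_def)
    finally show ?thesis .
  next
    case 2
    then have "k - 2^n < 2^n" by auto
    then show ?thesis using 2 by (simp add: Fail_def)
  next
    case 3
    have e: "k - 2^n = 2^n" "k - 1 - 2^n = 2^n - 1" using 3 by simp_all
    have "\<not> k - 1 < 2^n" using 3 by simp
    then show ?thesis using 3 e by (simp add: Fail_def)
  qed
qed

lemma Fail_double: "k \<le> 2^n \<Longrightarrow> Fail (Suc n) (2*k) d \<longleftrightarrow> Fail n k d"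
proof (cases "k < 2^n")
  case True
  then show ?thesis using cellN_children[OF True, of d] by (simp add: Fail_def)
next
  case False
  assume "k \<le> 2^n"
  then have k: "k = 2^n" using False by simp
  have k1: "k \<ge> 1" using k by simp
  have "2 * k - 1 = 2 * (k - 1) + 1" using k1 by arith
  then have "2 * k - 1 = 2 * (2^n - 1) + 1" using k by simp
  moreover have "(2::nat)^n - 1 < 2^n" by simp
  ultimately show ?thesis using k cellN_children[of "2^n - 1" n d]
    by (simp add: Fail_def)
qed

lemma Fail_pos:
  "Fail n k d \<Longrightarrow> k \<le> 2^n \<Longrightarrow> ncst d \<Longrightarrow>
     0 \<le> al d * ar d \<and> (k < 2^n \<longrightarrow> ar d \<noteq> 0) \<and> (0 < k \<longrightarrow> al d \<noteq> 0)"
proof (induction n arbitrary: k d)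
  case 0
  obtain x y z where d: "d = (x,y,z)" by (cases d)
  have "k = 0 \<or> k = 1" using 0 by auto
  then show ?case using 0 d by (auto simp: Fail_def al_def ar_def ncst_def)
next
  case (Suc n)
  obtain x y z where d: "d = (x,y,z)" by (cases d)
  show ?case
  proof (cases "k \<le> 2^n")
    case True
    have F: "Fail n k (cL d)" using Suc.prems True Fail_L by blast
    have IH: "0 \<le> al (cL d) * ar (cL d) \<and> (k < 2^n \<longrightarrow> ar (cL d) \<noteq> 0) \<and> (0 < k \<longrightarrow> al (cL d) \<noteq> 0)"
      using Suc.IH[OF F True ncst_cL[OF Suc.prems(3)]] .
    have h1: "0 \<le> al d * (x - y)" using IH d
      by (auto simp: ar_cL zero_le_mult_iff)
    have r: "ar d = al d + 3 * (x - y)" using ar_al[of d] d by simp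
    have h2: "al d * ar d = (al d)^2 + 3 * (al d * (x - y))" unfolding r by (simp add: algebra_simps power2_eq_square)
    have h3: "0 \<le> al d * ar d" using h1 h2 by (simp add: add_nonneg_nonneg)
    have h4: "ar d \<noteq> 0"
    proof
      assume "ar d = 0"
      then have "al d * ar d = 0" by simp
      then have "(al d)^2 = 0" using h1 h2 zero_le_power2[of "al d"] by linarith
      then have "al d = 0" by simp
      then show False using \<open>ar d = 0\<close> Suc.prems(3) d by (auto simp: al_def ar_def ncst_def)
    qed
    have h5: "0 < k \<longrightarrow> al d \<noteq> 0" using IH by simp
    show ?thesis using h3 h4 h5 by simp
  next
    case False
    have k2: "k \<le> 2^Suc n" using Suc.prems by simp
    have F: "Fail n (k - 2^n) (cR d)" using Suc.prems False Fail_R[of n k d] k2 by simp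
    have IH: "0 \<le> al (cR d) * ar (cR d) \<and> (k - 2^n < 2^n \<longrightarrow> ar (cR d) \<noteq> 0) \<and> (0 < k - 2^n \<longrightarrow> al (cR d) \<noteq> 0)"
      using Suc.IH[OF F _ ncst_cR[OF Suc.prems(3)]] k2 by simp
    have h1: "0 \<le> ar d * (y - x)" using IH d
      by (auto simp: al_cR zero_le_mult_iff)
    have r: "al d = ar d + 3 * (y - x)" using ar_al[of d] d by simp
    have h2: "al d * ar d = (ar d)^2 + 3 * (ar d * (y - x))" unfolding r by (simp add: algebra_simps power2_eq_square)
    have h3: "0 \<le> al d * ar d" using h1 h2 by (simp add: add_nonneg_nonneg)
    have h4: "al d \<noteq> 0"
    proof
      assume "al d = 0"
      then have "al d * ar d = 0" by simp
      then have "(ar d)^2 = 0" using h1 h2 zero_le_power2[of "ar d"] by linarith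
      then have "ar d = 0" by simp
      then show False using \<open>al d = 0\<close> Suc.prems(3) d by (auto simp: al_def ar_def ncst_def)
    qed
    have h5: "k < 2^Suc n \<longrightarrow> ar d \<noteq> 0" using IH False by auto
    show ?thesis using h3 h4 h5 False by simp
  qed
qed

lemma Fail_uniq_aux:
  "Fail n k d \<Longrightarrow> Fail n k' d \<Longrightarrow> k \<le> 2^n \<Longrightarrow> k' \<le> 2^n \<Longrightarrow> ncst d \<Longrightarrow> k < k' \<Longrightarrow> False"
proof (induction n arbitrary: k k' d)
  case 0
  obtain x y z where d: "d = (x,y,z)" by (cases d)
  have "k = 0" "k' = 1" using 0 by auto
  then show ?case using 0 d by (auto simp: Fail_def al_def ar_def ncst_def)
next
  case (Suc n)
  obtain x y z where d: "d = (x,y,z)" by (cases d)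
  consider "k' \<le> 2^n" | "2^n \<le> k" | "k < 2^n \<and> 2^n < k'" by linarith
  then show ?case
  proof cases
    case 1
    then show ?thesis using Suc.IH[of k "cL d" k'] Suc.prems Fail_L ncst_cL by auto
  next
    case 2
    have "Fail n (k - 2^n) (cR d)" "Fail n (k' - 2^n) (cR d)"
      using Suc.prems 2 Fail_R by auto
    moreover have "k' - 2^n \<le> 2^n" "k - 2^n \<le> 2^n" "k - 2^n < k' - 2^n" using Suc.prems 2 by auto
    ultimately show ?thesis using Suc.IH[of "k - 2^n" "cR d" "k' - 2^n"] Suc.prems(5) ncst_cR by blast
  next
    case 3
    have F1: "Fail n k (cL d)" using Suc.prems 3 Fail_L by auto
    have F2: "Fail n (k' - 2^n) (cR d)" using Suc.prems 3 Fail_R by auto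
    have P1: "0 \<le> al (cL d) * ar (cL d) \<and> ar (cL d) \<noteq> 0"
      using Fail_pos[OF F1 _ ncst_cL[OF Suc.prems(5)]] 3 by auto
    have P2: "0 \<le> al (cR d) * ar (cR d) \<and> al (cR d) \<noteq> 0"
      using Fail_pos[OF F2 _ ncst_cR[OF Suc.prems(5)]] 3 Suc.prems(4) by auto
    have a1: "0 \<le> al d * (x - y)" "x \<noteq> y" using P1 d by (auto simp: ar_cL zero_le_mult_iff)
    have a2: "0 \<le> ar d * (y - x)" using P2 d by (auto simp: al_cR zero_le_mult_iff)
    show False
    proof (cases "x < y")
      case True
      then have "al d \<le> 0" "ar d \<ge> 0" using a1 a2 by (auto simp: zero_le_mult_iff)
      then show False using True d by (simp add: al_def ar_def)
    next
      case False
      then have "x > y" using a1 by simp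
      then have "al d \<ge> 0" "ar d \<le> 0" using a1 a2 by (auto simp: zero_le_mult_iff)
      then show False using \<open>x > y\<close> d by (simp add: al_def ar_def)
    qed
  qed
qed

lemma Fail_uniq:
  "Fail n k d \<Longrightarrow> Fail n k' d \<Longrightarrow> k \<le> 2^n \<Longrightarrow> k' \<le> 2^n \<Longrightarrow> ncst d \<Longrightarrow> k = k'"
  using Fail_uniq_aux[of n k d k'] Fail_uniq_aux[of n k' d k] by (metis linorder_neqE_nat)



definition Hd :: "(nat \<Rightarrow> complex) \<Rightarrow> (complex \<Rightarrow> real) \<Rightarrow> bool" where
  "Hd p f \<longleftrightarrow> (\<forall>m. \<forall>w\<in>SG_words m. \<forall>i j k. {i, j, k} = {0,1,2::nat} \<longrightarrow>
        f ((SG_word p w (p i) + SG_word p w (p j)) / 2)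
          = (2 * f (SG_word p w (p i)) + 2 * f (SG_word p w (p j)) + f (SG_word p w (p k))) / 5)"

lemma SG_word_Nil[simp]: "SG_word p [] = id" by (simp add: SG_word_def)
lemma SG_word_Cons: "SG_word p (l#w) = SG_map p l \<circ> SG_word p w" by (simp add: SG_word_def)

lemma SG_word_snoc: "SG_word p (w @ [l]) = SG_word p w \<circ> SG_map p l"
  by (induction w) (simp_all add: SG_word_def comp_assoc)

lemma SG_word_affine: "SG_word p w z = z / 2^length w + SG_word p w 0"
proof (induction w arbitrary: z)
  case Nil then show ?case by simp
next
  case (Cons l w)
  have "SG_word p (l#w) z = (SG_word p w z + p l) / 2" by (simp add: SG_word_Cons SG_map_def)
  also have "\<dots> = (z / 2^length w + SG_word p w 0 + p l) / 2" by (subst Cons.IH[of z]) (rule refl)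
  also have "\<dots> = z / 2^length (l#w) + (SG_word p w 0 + p l) / 2" by (simp add: field_simps)
  also have "(SG_word p w 0 + p l) / 2 = SG_word p (l#w) 0" by (simp add: SG_word_Cons SG_map_def)
  finally show ?case .
qed

lemma SG_words_Cons: "w \<in> SG_words m \<Longrightarrow> l < 3 \<Longrightarrow> l # w \<in> SG_words (Suc m)"
  by (auto simp: SG_words_def)
lemma SG_words_snoc: "w \<in> SG_words m \<Longrightarrow> l < 3 \<Longrightarrow> w @ [l] \<in> SG_words (Suc m)"
  by (auto simp: SG_words_def)

lemma SG_map_mid: "SG_map p l ((a + b) / 2) = (SG_map p l a + SG_map p l b) / 2"
  by (simp add: SG_map_def field_simps)

lemma Hd_comp: assumes "Hd p f" "l < 3" shows "Hd p (f \<circ> SG_map p l)"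
  unfolding Hd_def
proof (intro allI ballI impI)
  fix m w i j k assume w: "w \<in> SG_words m" and ijk: "{i, j, k} = {0,1,2::nat}"
  have w': "l # w \<in> SG_words (Suc m)" using SG_words_Cons[OF w assms(2)] .
  show "(f \<circ> SG_map p l) ((SG_word p w (p i) + SG_word p w (p j)) / 2) =
        (2 * (f \<circ> SG_map p l) (SG_word p w (p i)) + 2 * (f \<circ> SG_map p l) (SG_word p w (p j)) +
         (f \<circ> SG_map p l) (SG_word p w (p k))) / 5"
  proof -
    have "f ((SG_word p (l#w) (p i) + SG_word p (l#w) (p j)) / 2) =
       (2 * f (SG_word p (l#w) (p i)) + 2 * f (SG_word p (l#w) (p j)) + f (SG_word p (l#w) (p k))) / 5"
      using assms(1) w' ijk unfolding Hd_def by blast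
    then show ?thesis by (simp add: SG_word_Cons SG_map_mid)
  qed
qed

lemma Hd_neg: "Hd p f \<Longrightarrow> Hd p (\<lambda>x. - f x)"
  unfolding Hd_def by (auto simp: field_simps)

lemma Hd_base: "Hd p f \<Longrightarrow> {i, j, k} = {0,1,2::nat} \<Longrightarrow>
   f ((p i + p j) / 2) = (2 * f (p i) + 2 * f (p j) + f (p k)) / 5"
  unfolding Hd_def by (drule spec[of _ 0], drule bspec[of _ _ "[]"]) (auto simp: SG_words_def)

lemma harm_Hd: "SG_harmonic p f \<Longrightarrow> Hd p f"
  unfolding SG_harmonic_def Hd_def by (erule conjunct2)

definition Vs :: "(nat \<Rightarrow> complex) \<Rightarrow> complex set" where
  "Vs p = (\<Union>n. SG_V p n)"

lemma Vs_iff: "x \<in> Vs p \<longleftrightarrow> (\<exists>n w j. w \<in> SG_words n \<and> j < 3 \<and> x = SG_word p w (p j))"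
  by (auto simp: Vs_def SG_V_def)

lemma Vs_vert: "j < 3 \<Longrightarrow> p j \<in> Vs p"
  unfolding Vs_iff by (rule exI[of _ 0], rule exI[of _ "[]"]) (auto simp: SG_words_def)

lemma Vs_map: "x \<in> Vs p \<Longrightarrow> l < 3 \<Longrightarrow> SG_map p l x \<in> Vs p"
  unfolding Vs_iff by (metis SG_word_Cons SG_words_Cons comp_apply)

lemma Vs_split: "x \<in> Vs p \<Longrightarrow> \<exists>l<3. \<exists>y\<in>Vs p. x = SG_map p l y"
proof -
  assume "x \<in> Vs p"
  then obtain n w j where w: "w \<in> SG_words n" "j < 3" "x = SG_word p w (p j)" by (auto simp: Vs_iff)
  show ?thesis
  proof (cases w)
    case Nil
    then show ?thesis using w Vs_vert[of j p] by (intro exI[of _ j]) (auto simp: SG_map_def)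
  next
    case (Cons l w')
    have "w' \<in> SG_words (n - 1)" "l < 3" using w Cons by (auto simp: SG_words_def)
    then have "SG_word p w' (p j) \<in> Vs p" using w by (auto simp: Vs_iff)
    then show ?thesis using Cons w \<open>l < 3\<close> by (auto simp: SG_word_Cons)
  qed
qed

lemma norm_SG_map: "norm x \<le> M \<Longrightarrow> norm (p l) \<le> M \<Longrightarrow> norm (SG_map p l x) \<le> M"
proof -
  assume a: "norm x \<le> M" "norm (p l) \<le> M"
  have "norm (SG_map p l x) = norm (x + p l) / 2" by (simp add: SG_map_def)
  also have "\<dots> \<le> (norm x + norm (p l)) / 2" by (intro divide_right_mono norm_triangle_ineq) simp
  also have "\<dots> \<le> M" using a by simp
  finally show ?thesis .
qed

lemma Vs_bounded: "bounded (Vs p)"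
proof -
  define M where "M = norm (p 0) + norm (p 1) + norm (p 2)"
  have pM: "norm (p l) \<le> M" if "l < 3" for l
  proof -
    have "l = 0 \<or> l = 1 \<or> l = 2" using that by auto
    then show ?thesis unfolding M_def by auto
  qed
  have "norm (SG_word p w (p j)) \<le> M" if "set w \<subseteq> {0,1,2}" "j < 3" for w j
    using that
  proof (induction w)
    case Nil then show ?case using pM by simp
  next
    case (Cons l w)
    have "l < 3" using Cons by auto
    then show ?case using Cons pM norm_SG_map[of "SG_word p w (p j)" M p l] by (simp add: SG_word_Cons)
  qed
  then have "\<forall>x\<in>Vs p. norm x \<le> M" by (auto simp: Vs_iff SG_words_def)
  then show ?thesis by (auto simp: bounded_iff)
qed

lemma dist_SG_map: "dist (SG_map p l x) (SG_map p l y) = dist x y / 2"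
proof -
  have e: "SG_map p l x - SG_map p l y = (x - y) / 2" by (simp add: SG_map_def field_simps)
  show ?thesis unfolding dist_norm e by (simp add: norm_divide)
qed

lemma SG_map_iter: "(SG_map p l ^^ n) x = p l + (x - p l) / 2^n"
proof (induction n)
  case 0 then show ?case by simp
next
  case (Suc n)
  have "(SG_map p l ^^ Suc n) x = SG_map p l ((SG_map p l ^^ n) x)" by simp
  also have "\<dots> = SG_map p l (p l + (x - p l) / 2^n)" by (simp only: Suc)
  also have "\<dots> = (p l + (x - p l) / 2^n + p l) / 2" by (simp add: SG_map_def)
  also have "\<dots> = p l + (x - p l) / 2^Suc n" by (simp add: field_simps)
  finally show ?case .
qed

lemma small_pow: "0 < e \<Longrightarrow> \<exists>n. C / 2^n < (e::real)"
proof -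
  assume e: "0 < e"
  obtain n where n: "(1/2::real)^n < e / (\<bar>C\<bar> + 1)"
    using real_arch_pow_inv[of "e / (\<bar>C\<bar> + 1)" "1/2"] e by auto
  have "C / 2^n \<le> (\<bar>C\<bar> + 1) * (1/2)^n" by (simp add: power_one_over field_simps)
  also have "\<dots> < (\<bar>C\<bar> + 1) * (e / (\<bar>C\<bar> + 1))"
    by (intro mult_strict_left_mono n) auto
  also have "\<dots> = e" by simp
  finally show ?thesis by blast
qed

lemma words_exist: "x \<in> K \<Longrightarrow> K \<subseteq> (\<Union>l\<in>{0,1,2}. SG_map p l ` K) \<Longrightarrow>
    \<exists>w\<in>SG_words n. \<exists>y\<in>K. x = SG_word p w y"
proof (induction n)
  case 0 then show ?case by (auto simp: SG_words_def)
next
  case (Suc n)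
  then obtain w y where w: "w \<in> SG_words n" "y \<in> K" "x = SG_word p w y" by blast
  then obtain l z where "l \<in> {0,1,2}" "z \<in> K" "y = SG_map p l z" using Suc.prems by blast
  then show ?case using w SG_words_snoc[of w n l] by (intro bexI[of _ "w @ [l]"] bexI[of _ z]) (auto simp: SG_word_snoc)
qed

lemma SG_unique:
  assumes K: "compact K" "K \<noteq> {}" "K = (\<Union>i\<in>{0,1,2}. SG_map p i ` K)"
  shows "K = closure (Vs p)"
proof -
  have cl: "closed K" using K(1) compact_imp_closed by auto
  have mapK: "SG_map p l x \<in> K" if "x \<in> K" "l < 3" for x l
  proof -
    have "l \<in> {0,1,2}" using that by auto
    then show ?thesis using that K(3) by blast
  qed
  obtain x0 where x0: "x0 \<in> K" using K(2) by auto
  have vert: "p l \<in> K" if "l < 3" for l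
  proof -
    have iterK: "(SG_map p l ^^ n) x0 \<in> K" for n
      by (induction n) (auto simp: x0 mapK that)
    have "p l \<in> closure K"
      unfolding closure_approachable
    proof (intro allI impI)
      fix e :: real assume "0 < e"
      then obtain n where n: "norm (x0 - p l) / 2^n < e" using small_pow by blast
      have "dist ((SG_map p l ^^ n) x0) (p l) = norm (x0 - p l) / 2^n"
        by (simp add: SG_map_iter dist_norm norm_divide norm_power)
      then show "\<exists>y\<in>K. dist y (p l) < e" using iterK n by metis
    qed
    then show ?thesis using cl by simp
  qed
  have VsK: "Vs p \<subseteq> K"
  proof
    fix x assume "x \<in> Vs p"
    then obtain n w j where w: "w \<in> SG_words n" "j < 3" "x = SG_word p w (p j)" by (auto simp: Vs_iff)
    have "set w \<subseteq> {0,1,2}" using w by (auto simp: SG_words_def)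
    then have "SG_word p w (p j) \<in> K"
      by (induction w) (auto simp: SG_word_Cons vert w(2) intro!: mapK)
    then show "x \<in> K" using w by simp
  qed
  have bK: "bounded K" using K(1) compact_imp_bounded by auto
  then obtain a where a: "\<forall>y\<in>K. norm y \<le> a" by (auto simp: bounded_iff)
  define D where "D = a + norm (p 0)"
  have D: "\<forall>y\<in>K. norm (y - p 0) \<le> D"
    using a unfolding D_def by (metis add_mono norm_triangle_ineq4 order_trans order_refl)
  have "K \<subseteq> closure (Vs p)"
  proof
    fix x assume xK: "x \<in> K"
    show "x \<in> closure (Vs p)"
      unfolding closure_approachable
    proof (intro allI impI)
      fix e :: real assume "0 < e"
      then obtain n where n: "D / 2^n < e" using small_pow by blast
      obtain w y where w: "w \<in> SG_words n" "y \<in> K" "x = SG_word p w y"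
        using words_exist[OF xK] K(3) by blast
      have "dist (SG_word p w (p 0)) x = norm (y - p 0) / 2^n"
        using w SG_word_affine[of p w y] SG_word_affine[of p w "p 0"]
        by (simp add: dist_norm SG_words_def norm_divide norm_power norm_minus_commute diff_divide_distrib[symmetric])
      also have "\<dots> \<le> D / 2^n" using D w by (simp add: divide_right_mono)
      finally have "dist (SG_word p w (p 0)) x < e" using n by simp
      moreover have "SG_word p w (p 0) \<in> Vs p" unfolding Vs_iff
        by (rule exI[of _ n], rule exI[of _ w], rule exI[of _ 0]) (use w in auto)
      ultimately show "\<exists>y\<in>Vs p. dist y x < e" by blast
    qed
  qed
  moreover have "closure (Vs p) \<subseteq> K" using VsK cl closure_minimal by blast
  ultimately show ?thesis by blast
qed

lemma SG_exists:
  "compact (closure (Vs p)) \<and> closure (Vs p) \<noteq> {} \<and>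
     closure (Vs p) = (\<Union>i\<in>{0,1,2}. SG_map p i ` closure (Vs p))"
proof (intro conjI)
  show c: "compact (closure (Vs p))" using Vs_bounded compact_closure by blast
  show "closure (Vs p) \<noteq> {}" using Vs_vert[of 0 p] by auto
  have sub1: "SG_map p l ` closure (Vs p) \<subseteq> closure (Vs p)" if "l < 3" for l
  proof
    fix z assume "z \<in> SG_map p l ` closure (Vs p)"
    then obtain x where x: "x \<in> closure (Vs p)" "z = SG_map p l x" by blast
    show "z \<in> closure (Vs p)"
      unfolding closure_approachable
    proof (intro allI impI)
      fix e :: real assume "0 < e"
      then obtain y where "y \<in> Vs p" "dist y x < e" using x(1) unfolding closure_approachable by blast
      moreover have "dist (SG_map p l y) z = dist y x / 2" using x dist_SG_map[of p l y x] by simp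
      ultimately have "dist (SG_map p l y) z < e" using \<open>0 < e\<close> by simp
      then show "\<exists>y\<in>Vs p. dist y z < e" using \<open>y \<in> Vs p\<close> Vs_map that by blast
    qed
  qed
  have cU: "closed (\<Union>i\<in>{0,1,2}. SG_map p i ` closure (Vs p))"
  proof (intro closed_UN ballI compact_imp_closed)
    fix i :: nat
    have "continuous_on (closure (Vs p)) (SG_map p i)" unfolding SG_map_def by (intro continuous_intros) auto
    then show "compact (SG_map p i ` closure (Vs p))" using c compact_continuous_image by blast
  qed simp
  have "Vs p \<subseteq> (\<Union>i\<in>{0,1,2}. SG_map p i ` closure (Vs p))"
  proof
    fix x assume "x \<in> Vs p"
    then obtain l y where "l < 3" "y \<in> Vs p" "x = SG_map p l y" using Vs_split by blast
    moreover have "l \<in> {0,1,2}" using \<open>l < 3\<close> by auto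
    moreover have "y \<in> closure (Vs p)" using \<open>y \<in> Vs p\<close> closure_subset by blast
    ultimately show "x \<in> (\<Union>i\<in>{0,1,2}. SG_map p i ` closure (Vs p))" by blast
  qed
  then have "closure (Vs p) \<subseteq> (\<Union>i\<in>{0,1,2}. SG_map p i ` closure (Vs p))"
    by (rule closure_minimal[OF _ cU])
  moreover have "(\<Union>i\<in>{0,1,2}. SG_map p i ` closure (Vs p)) \<subseteq> closure (Vs p)"
  proof (rule UN_least)
    fix i :: nat assume "i \<in> {0,1,2}"
    then have "i < 3" by auto
    then show "SG_map p i ` closure (Vs p) \<subseteq> closure (Vs p)" by (rule sub1)
  qed
  ultimately show "closure (Vs p) = (\<Union>i\<in>{0,1,2}. SG_map p i ` closure (Vs p))" by (rule subset_antisym)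
qed

lemma SG_eq: "SG p = closure (Vs p)"
  unfolding SG_def
proof (rule the_equality)
  show "compact (closure (Vs p)) \<and> closure (Vs p) \<noteq> {} \<and>
     closure (Vs p) = (\<Union>i\<in>{0,1,2}. SG_map p i ` closure (Vs p))" by (rule SG_exists)
next
  fix K assume "compact K \<and> K \<noteq> {} \<and> K = (\<Union>i\<in>{0, 1, 2}. SG_map p i ` K)"
  then show "K = closure (Vs p)" by (elim conjE) (rule SG_unique)
qed



definition distinct3 :: "nat \<Rightarrow> nat \<Rightarrow> nat \<Rightarrow> bool" where
  "distinct3 i j k \<longleftrightarrow> i < 3 \<and> j < 3 \<and> k < 3 \<and> i \<noteq> j \<and> j \<noteq> k \<and> i \<noteq> k"

lemma distinct3_set: "distinct3 i j k \<Longrightarrow> {i, j, k} = {0,1,2::nat}"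
  unfolding distinct3_def by (auto simp: less_Suc_eq numeral_3_eq_3)

lemma distinct3_perm: "distinct3 i j k \<Longrightarrow> distinct3 j i k \<and> distinct3 i k j"
  unfolding distinct3_def by auto

definition dat :: "(nat \<Rightarrow> complex) \<Rightarrow> (complex \<Rightarrow> real) \<Rightarrow> nat \<Rightarrow> nat \<Rightarrow> nat \<Rightarrow> real \<times> real \<times> real" where
  "dat p h i j k = (h (p i), h (p j), h (p k))"

lemma vals:
  assumes "Hd p h" "distinct3 i j k"
  shows "(h \<circ> SG_map p i) (p i) = h (p i)"
    "(h \<circ> SG_map p i) (p j) = (2 * h (p i) + 2 * h (p j) + h (p k)) / 5"
    "(h \<circ> SG_map p i) (p k) = (2 * h (p i) + 2 * h (p k) + h (p j)) / 5"
proof -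
  have "SG_map p i (p i) = p i" unfolding SG_map_def by (simp add: field_simps)
  then show "(h \<circ> SG_map p i) (p i) = h (p i)" by simp
  have s1: "{i, j, k} = {0,1,2::nat}" "{i, k, j} = {0,1,2::nat}"
    using distinct3_set[OF assms(2)] distinct3_set[of i k j] distinct3_perm[OF assms(2)] by simp_all
  have e1: "SG_map p i (p j) = (p i + p j) / 2" "SG_map p i (p k) = (p i + p k) / 2"
    by (simp_all add: SG_map_def add.commute)
  show "(h \<circ> SG_map p i) (p j) = (2 * h (p i) + 2 * h (p j) + h (p k)) / 5"
    by (simp only: comp_apply e1 Hd_base[OF assms(1) s1(1)])
  show "(h \<circ> SG_map p i) (p k) = (2 * h (p i) + 2 * h (p k) + h (p j)) / 5"
    by (simp only: comp_apply e1 Hd_base[OF assms(1) s1(2)])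
qed

lemma dat_L: "Hd p h \<Longrightarrow> distinct3 i j k \<Longrightarrow> dat p (h \<circ> SG_map p i) i j k = cL (dat p h i j k)"
  unfolding dat_def by (simp only: vals) (simp add: cL_def)

lemma dat_R: "Hd p h \<Longrightarrow> distinct3 i j k \<Longrightarrow> dat p (h \<circ> SG_map p j) i j k = cR (dat p h i j k)"
proof -
  assume a: "Hd p h" "distinct3 i j k"
  have d: "distinct3 j i k" using distinct3_perm[OF a(2)] by simp
  show ?thesis unfolding dat_def by (simp only: vals[OF a(1) d]) (simp add: cR_def algebra_simps)
qed

lemma edge_map_i: "SG_map p i (p i + of_real u * (p j - p i)) = p i + of_real (u/2) * (p j - p i)"
  by (simp add: SG_map_def field_simps)
lemma edge_map_j: "SG_map p j (p i + of_real u * (p j - p i)) = p i + of_real ((1+u)/2) * (p j - p i)"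
  by (simp add: SG_map_def field_simps)

lemma er_L: "edge_restr p (h \<circ> SG_map p i) i j u = edge_restr p h i j (u/2)"
  by (simp add: edge_restr_def edge_map_i)
lemma er_R: "edge_restr p (h \<circ> SG_map p j) i j u = edge_restr p h i j ((1+u)/2)"
  by (simp add: edge_restr_def edge_map_j)
lemma er_rev: "edge_restr p h j i v = edge_restr p h i j (1 - v)"
  unfolding edge_restr_def by (rule arg_cong[of _ _ h]) (simp add: field_simps)

lemma dyadic_approx:
  assumes "t \<in> {0..1::real}"
  shows "\<exists>k::nat. k \<le> 2^n \<and> \<bar>t - real k / 2^n\<bar> \<le> 1 / 2^n"
proof -
  define fl where "fl = \<lfloor>t * 2^n\<rfloor>"
  have f1: "of_int fl \<le> t * 2^n" "t * 2^n < of_int fl + 1" unfolding fl_def by linarith+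
  have t01: "0 \<le> t" "t \<le> 1" using assms by auto
  have "0 \<le> t * 2^n" using t01 by simp
  then have f0: "0 \<le> fl" unfolding fl_def by (simp only: zero_le_floor)
  have "t * 2^n \<le> 1 * 2^n" using t01 by (intro mult_right_mono) auto
  then have "t * 2^n \<le> 2^n" by simp
  moreover have "(2::real)^n = real_of_int (2^n)" by simp
  ultimately have "real_of_int fl \<le> real_of_int (2^n)" using f1 by linarith
  then have f2: "fl \<le> 2^n" by (simp only: of_int_le_iff)
  define k where "k = nat fl"
  have kr: "real k = of_int fl" unfolding k_def using f0 by simp
  have "k \<le> 2^n" unfolding k_def using f2 by (simp add: nat_le_iff)
  moreover have "\<bar>t - real k / 2^n\<bar> \<le> 1 / 2^n"
  proof -
    have a1: "\<bar>t * 2^n - real k\<bar> \<le> 1" using f1 kr by linarith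
    have "t - real k / 2^n = (t * 2^n - real k) / 2^n" by (simp add: field_simps)
    then have "\<bar>t - real k / 2^n\<bar> = \<bar>t * 2^n - real k\<bar> / 2^n" by simp
    also have "\<dots> \<le> 1 / 2^n" using a1 by (intro divide_right_mono) auto
    finally show ?thesis .
  qed
  ultimately show ?thesis by blast
qed

lemma dense_ge:
  fixes G :: "real \<Rightarrow> real"
  assumes G: "continuous_on {0..1} G" and d: "\<And>n k. k \<le> 2^n \<Longrightarrow> c \<le> G (real k / 2^n)"
    and t: "t \<in> {0..1}"
  shows "c \<le> G t"
proof (rule ccontr)
  assume "\<not> c \<le> G t"
  then have e: "0 < c - G t" by simp
  have "\<forall>x\<in>{0..1}. \<forall>e>0. \<exists>d>0. \<forall>x'\<in>{0..1}. dist x' x < d \<longrightarrow> dist (G x') (G x) < e"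
    using G unfolding continuous_on_iff .
  from this[rule_format, OF t e] obtain dd where dd: "dd > 0"
    "\<forall>x'\<in>{0..1}. dist x' t < dd \<longrightarrow> dist (G x') (G t) < c - G t" by blast
  obtain n where n: "1 / 2^n < dd" using small_pow[OF dd(1), of 1] by blast
  obtain k where k: "k \<le> 2^n" "\<bar>t - real k / 2^n\<bar> \<le> 1 / 2^n" using dyadic_approx[OF t] by blast
  have "real k \<le> 2^n" using k(1) by (metis of_nat_le_iff of_nat_numeral of_nat_power)
  then have "real k / 2^n \<le> 1" by simp
  then have kin: "real k / 2^n \<in> {0..1}" by simp
  have "dist (real k / 2^n) t = \<bar>t - real k / 2^n\<bar>" by (simp add: dist_real_def abs_minus_commute)
  then have "dist (real k / 2^n) t < dd" using k(2) n by linarith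
  then have "dist (G (real k / 2^n)) (G t) < c - G t" using dd(2) kin by blast
  then have "G (real k / 2^n) < c" unfolding dist_real_def by linarith
  then show False using d[OF k(1)] by simp
qed

lemma edge_dyadic_Vs: "i < 3 \<Longrightarrow> j < 3 \<Longrightarrow> k \<le> 2^n \<Longrightarrow>
    p i + of_real (real k / 2^n) * (p j - p i) \<in> Vs p"
proof (induction n arbitrary: k)
  case 0
  then have "k = 0 \<or> k = 1" by auto
  then show ?case using Vs_vert 0 by auto
next
  case (Suc n)
  show ?case
  proof (cases "k \<le> 2^n")
    case True
    have eq: "real k / 2^Suc n = (real k / 2^n) / 2" by simp
    have "p i + of_real (real k / 2^Suc n) * (p j - p i) = SG_map p i (p i + of_real (real k / 2^n) * (p j - p i))"
      unfolding eq edge_map_i by (rule refl)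
    moreover have "p i + of_real (real k / 2^n) * (p j - p i) \<in> Vs p" using Suc.IH[OF Suc.prems(1,2) True] .
    ultimately show ?thesis using Vs_map Suc.prems(1) by metis
  next
    case False
    have kk: "k - 2^n \<le> 2^n" using Suc.prems by simp
    have r: "real (k - 2^n) = real k - 2^n" using False by (simp add: of_nat_diff)
    have "p i + of_real (real k / 2^Suc n) * (p j - p i) = SG_map p j (p i + of_real (real (k - 2^n) / 2^n) * (p j - p i))"
      unfolding edge_map_j r by (simp add: field_simps)
    moreover have "p i + of_real (real (k - 2^n) / 2^n) * (p j - p i) \<in> Vs p" using Suc.IH[OF Suc.prems(1,2) kk] .
    ultimately show ?thesis using Vs_map Suc.prems(2) by metis
  qed
qed

lemma edge_in_SG:
  assumes "i < 3" "j < 3" "t \<in> {0..1}"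
  shows "p i + of_real t * (p j - p i) \<in> SG p"
  unfolding SG_eq closure_approachable
proof (intro allI impI)
  fix e :: real assume "0 < e"
  then obtain n where n: "norm (p j - p i) / 2^n < e" using small_pow by blast
  obtain k where k: "k \<le> 2^n" "\<bar>t - real k / 2^n\<bar> \<le> 1 / 2^n" using dyadic_approx[OF assms(3)] by blast
  have "dist (p i + of_real (real k / 2^n) * (p j - p i)) (p i + of_real t * (p j - p i))
        = \<bar>t - real k / 2^n\<bar> * norm (p j - p i)"
  proof -
    have "(p i + of_real (real k / 2^n) * (p j - p i)) - (p i + of_real t * (p j - p i))
          = of_real (real k / 2^n - t) * (p j - p i)" by (simp add: algebra_simps)
    then have "dist (p i + of_real (real k / 2^n) * (p j - p i)) (p i + of_real t * (p j - p i))
        = norm (of_real (real k / 2^n - t) * (p j - p i))" by (simp only: dist_norm)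
    also have "\<dots> = \<bar>real k / 2^n - t\<bar> * norm (p j - p i)" by (simp only: norm_mult norm_of_real)
    finally show ?thesis by (simp add: abs_minus_commute)
  qed
  also have "\<dots> \<le> 1 / 2^n * norm (p j - p i)" using k(2) by (intro mult_right_mono) auto
  also have "\<dots> < e" using n by simp
  finally show "\<exists>y\<in>Vs p. dist y (p i + of_real t * (p j - p i)) < e"
    using edge_dyadic_Vs[OF assms(1,2) k(1)] by blast
qed

lemma G_cont:
  assumes "continuous_on (SG p) f" "i < 3" "j < 3"
  shows "continuous_on {0..1} (edge_restr p f i j)"
proof -
  have "continuous_on {0..1} (\<lambda>t::real. p i + of_real t * (p j - p i))" by (intro continuous_intros)
  moreover have "(\<lambda>t::real. p i + of_real t * (p j - p i)) ` {0..1} \<subseteq> SG p" using edge_in_SG assms by blast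
  ultimately show ?thesis unfolding edge_restr_def using continuous_on_compose2[OF assms(1)] by blast
qed

definition mn :: "real \<times> real \<times> real \<Rightarrow> real" where
  "mn d = (case d of (x,y,z) \<Rightarrow> min x (min y z))"

lemma mn_L: "mn d \<le> mn (cL d)" by (cases d) (auto simp: mn_def cL_def)
lemma mn_R: "mn d \<le> mn (cR d)" by (cases d) (auto simp: mn_def cR_def)

lemma MP_dyadic: "Hd p h \<Longrightarrow> distinct3 i j k \<Longrightarrow> k0 \<le> 2^n \<Longrightarrow>
    mn (dat p h i j k) \<le> edge_restr p h i j (real k0 / 2^n)"
proof (induction n arbitrary: h k0)
  case 0
  then have "k0 = 0 \<or> k0 = 1" by auto
  then show ?case by (auto simp: mn_def dat_def edge_restr_def)
next
  case (Suc n)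
  have i3: "i < 3" "j < 3" using Suc.prems(2) by (auto simp: distinct3_def)
  show ?case
  proof (cases "k0 \<le> 2^n")
    case True
    have H: "Hd p (h \<circ> SG_map p i)" using Hd_comp Suc.prems i3 by blast
    have "mn (dat p h i j k) \<le> mn (dat p (h \<circ> SG_map p i) i j k)"
      using dat_L[OF Suc.prems(1,2)] mn_L by simp
    also have "\<dots> \<le> edge_restr p (h \<circ> SG_map p i) i j (real k0 / 2^n)"
      using Suc.IH[OF H Suc.prems(2) True] .
    also have "\<dots> = edge_restr p h i j (real k0 / 2^Suc n)" by (simp add: er_L mult.commute)
    finally show ?thesis .
  next
    case False
    have H: "Hd p (h \<circ> SG_map p j)" using Hd_comp Suc.prems i3 by blast
    have kk: "k0 - 2^n \<le> 2^n" using Suc.prems by simp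
    have r: "real (k0 - 2^n) = real k0 - 2^n" using False by (simp add: of_nat_diff)
    have "mn (dat p h i j k) \<le> mn (dat p (h \<circ> SG_map p j) i j k)"
      using dat_R[OF Suc.prems(1,2)] mn_R by simp
    also have "\<dots> \<le> edge_restr p (h \<circ> SG_map p j) i j (real (k0 - 2^n) / 2^n)"
      using Suc.IH[OF H Suc.prems(2) kk] .
    also have "\<dots> = edge_restr p h i j (real k0 / 2^Suc n)"
      unfolding er_R r by (simp add: field_simps)
    finally show ?thesis .
  qed
qed

lemma MP:
  assumes "Hd p h" "distinct3 i j k" "continuous_on {0..1} (edge_restr p h i j)" "u \<in> {0..1}"
  shows "mn (dat p h i j k) \<le> edge_restr p h i j u"
  using dense_ge[OF assms(3) MP_dyadic[OF assms(1,2)] assms(4)] .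

lemma cell_exists:
  "Hd p h \<Longrightarrow> distinct3 i j k \<Longrightarrow> k0 < 2^n \<Longrightarrow>
    \<exists>h'. Hd p h' \<and> (\<forall>u. edge_restr p h' i j u = edge_restr p h i j ((real k0 + u) / 2^n))
       \<and> dat p h' i j k = cellN n k0 (dat p h i j k)"
proof (induction n arbitrary: h k0)
  case 0 then show ?case by auto
next
  case (Suc n)
  have i3: "i < 3" "j < 3" using Suc.prems(2) by (auto simp: distinct3_def)
  show ?case
  proof (cases "k0 < 2^n")
    case True
    have H: "Hd p (h \<circ> SG_map p i)" using Hd_comp Suc.prems i3 by blast
    obtain h' where h': "Hd p h'" "\<forall>u. edge_restr p h' i j u = edge_restr p (h \<circ> SG_map p i) i j ((real k0 + u) / 2^n)"
      "dat p h' i j k = cellN n k0 (dat p (h \<circ> SG_map p i) i j k)"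
      using Suc.IH[OF H Suc.prems(2) True] by blast
    show ?thesis
      using h' True dat_L[OF Suc.prems(1,2)] by (intro exI[of _ h']) (simp add: er_L mult.commute)
  next
    case False
    have H: "Hd p (h \<circ> SG_map p j)" using Hd_comp Suc.prems i3 by blast
    have kk: "k0 - 2^n < 2^n" using Suc.prems by simp
    have r: "real (k0 - 2^n) = real k0 - 2^n" using False by (simp add: of_nat_diff)
    obtain h' where h': "Hd p h'" "\<forall>u. edge_restr p h' i j u = edge_restr p (h \<circ> SG_map p j) i j ((real (k0 - 2^n) + u) / 2^n)"
      "dat p h' i j k = cellN n (k0 - 2^n) (dat p (h \<circ> SG_map p j) i j k)"
      using Suc.IH[OF H Suc.prems(2) kk] by blast
    have "\<forall>u. edge_restr p h' i j u = edge_restr p h i j ((real k0 + u) / 2^Suc n)"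
      using h'(2) unfolding er_R r by (simp add: field_simps)
    then show ?thesis
      using h' False dat_R[OF Suc.prems(1,2)] by (intro exI[of _ h']) simp
  qed
qed

lemma Hd_mid_exists: "Hd p f \<Longrightarrow> l < 3 \<Longrightarrow> m < 3 \<Longrightarrow> l \<noteq> m \<Longrightarrow>
   \<exists>q<3. f ((p m + p l) / 2) = (2 * f (p l) + 2 * f (p m) + f (p q)) / 5"
proof -
  assume a: "Hd p f" "l < 3" "m < 3" "l \<noteq> m"
  define q where "q = 3 - l - m"
  have "{l, m, q} = {0,1,2::nat}" using a unfolding q_def by auto
  then have "f ((p l + p m) / 2) = (2 * f (p l) + 2 * f (p m) + f (p q)) / 5" using Hd_base a(1) by blast
  moreover have "q < 3" using a unfolding q_def by auto
  ultimately show ?thesis by (metis add.commute)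
qed

lemma const_Vs:
  assumes "Hd p f" "\<And>l. l < 3 \<Longrightarrow> f (p l) = c" "x \<in> Vs p"
  shows "f x = c"
proof -
  obtain n w j where w: "w \<in> SG_words n" "j < 3" "x = SG_word p w (p j)" using assms(3) by (auto simp: Vs_iff)
  have "set w \<subseteq> {0,1,2}" using w by (auto simp: SG_words_def)
  then have "\<forall>f. Hd p f \<longrightarrow> (\<forall>l<3. f (p l) = c) \<longrightarrow> f (SG_word p w (p j)) = c"
  proof (induction w)
    case Nil then show ?case using w by auto
  next
    case (Cons l w)
    have l: "l < 3" using Cons.prems by auto
    show ?case
    proof (intro allI impI)
      fix g assume g: "Hd p g" "\<forall>l<3. g (p l) = c"
      have H: "Hd p (g \<circ> SG_map p l)" using Hd_comp g l by blast
      have "\<forall>m<3. (g \<circ> SG_map p l) (p m) = c"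
      proof (intro allI impI)
        fix m :: nat assume m: "m < 3"
        show "(g \<circ> SG_map p l) (p m) = c"
        proof (cases "m = l")
          case True then show ?thesis using g l by (simp add: SG_map_def)
        next
          case False
          then obtain q where "q < 3" "g ((p m + p l) / 2) = (2 * g (p l) + 2 * g (p m) + g (p q)) / 5"
            using Hd_mid_exists[OF g(1) l m] by metis
          then show ?thesis using g l m by (simp add: SG_map_def)
        qed
      qed
      moreover have "set w \<subseteq> {0,1,2}" using Cons.prems by simp
      ultimately have "(g \<circ> SG_map p l) (SG_word p w (p j)) = c" using Cons.IH H by blast
      then show "g (SG_word p (l # w) (p j)) = c" by (simp add: SG_word_Cons)
    qed
  qed
  then show ?thesis using assms w by simp
qed

lemma const_SG:
  assumes "Hd p f" "continuous_on (SG p) f" "f (p 0) = f (p 1)" "f (p 1) = f (p 2)" "x \<in> SG p"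
  shows "f x = f (p 0)"
proof -
  have v: "\<And>l. l < 3 \<Longrightarrow> f (p l) = f (p 0)"
  proof -
    fix l :: nat assume "l < 3"
    then have "l = 0 \<or> l = 1 \<or> l = 2" by auto
    then show "f (p l) = f (p 0)" using assms by auto
  qed
  show ?thesis
    using continuous_constant_on_closure[of "Vs p" f "f (p 0)" x] assms(2,5) const_Vs[OF assms(1) v]
    unfolding SG_eq by blast
qed



definition RT :: "(real \<Rightarrow> real) \<Rightarrow> real \<Rightarrow> real \<Rightarrow> bool" where
  "RT G t c \<longleftrightarrow> (\<forall>B. \<exists>dl>0. \<forall>s. t < s \<and> s < t + dl \<longrightarrow> B \<le> c * ((G s - G t) / (s - t)))"
definition LT :: "(real \<Rightarrow> real) \<Rightarrow> real \<Rightarrow> real \<Rightarrow> bool" where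
  "LT G t c \<longleftrightarrow> (\<forall>B. \<exists>dl>0. \<forall>s. t - dl < s \<and> s < t \<longrightarrow> B \<le> c * ((G s - G t) / (s - t)))"

lemma mn_cR_bound: "0 \<le> al d \<Longrightarrow> fst d + 3/10 * al d - 1/2 * \<bar>be d\<bar> \<le> mn (cR d)"
proof -
  assume a: "0 \<le> al d"
  obtain x y z where d: "d = (x,y,z)" by (cases d)
  have a': "0 \<le> z+y-2*x" using a d by (simp add: al_def)
  have ab: "z - y \<le> \<bar>z-y\<bar>" "y - z \<le> \<bar>z-y\<bar>" by auto
  have "x + 3/10 * (z+y-2*x) - 1/2 * \<bar>z-y\<bar> \<le> (2*x+2*y+z)/5" using a' by (simp add: abs_if field_simps)
  moreover have "x + 3/10 * (z+y-2*x) - 1/2 * \<bar>z-y\<bar> \<le> y" using a' by (simp add: abs_if field_simps)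
  moreover have "x + 3/10 * (z+y-2*x) - 1/2 * \<bar>z-y\<bar> \<le> (2*y+2*z+x)/5" using a' by (simp add: abs_if field_simps)
  ultimately have "x + 3/10 * (z+y-2*x) - 1/2 * \<bar>z-y\<bar> \<le> min ((2*x+2*y+z)/5) (min y ((2*y+2*z+x)/5))"
    by simp
  then show ?thesis unfolding d by (simp add: mn_def cR_def al_def be_def)
qed

lemma exist_level:
  assumes "0 < v" "v \<le> (1::real)"
  shows "\<exists>n. 1 / 2^(Suc n) < v \<and> v \<le> 1 / 2^n"
proof -
  obtain m where m: "1 / 2^m < v" using small_pow[OF assms(1), of 1] by blast
  have "1 / 2^Suc m < v"
  proof -
    have "1 / (2::real)^Suc m < 1 / 2^m" by (rule divide_strict_left_mono) auto
    then show ?thesis using m by linarith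
  qed
  then have ex: "\<exists>n. 1 / (2::real)^Suc n < v" by blast
  define n where "n = (LEAST n. 1 / (2::real)^Suc n < v)"
  have n1: "1 / 2^Suc n < v" unfolding n_def by (rule LeastI_ex[OF ex])
  have n2: "v \<le> 1 / 2^n"
  proof (cases n)
    case 0 then show ?thesis using assms by simp
  next
    case (Suc m')
    have "\<not> 1 / (2::real)^Suc m' < v"
    proof
      assume "1 / (2::real)^Suc m' < v"
      then have "n \<le> m'" unfolding n_def by (rule Least_le)
      then show False using Suc by simp
    qed
    then show ?thesis using Suc by simp
  qed
  show ?thesis using n1 n2 by blast
qed

lemma OS_pos:
  assumes H: "Hd p h" and D: "distinct3 i j k"
    and C: "continuous_on {0..1} (edge_restr p h i j)"
    and A: "al (dat p h i j k) > 0"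
  shows "RT (edge_restr p h i j) 0 1"
proof -
  define G where "G = edge_restr p h i j"
  define d where "d = dat p h i j k"
  define a where "a = al d"
  define b where "b = be d"
  have a0: "a > 0" using A unfolding a_def d_def .
  have G0: "G 0 = fst d" unfolding G_def d_def dat_def edge_restr_def by simp
  define X where "X n = 3/10 * (3/5)^n * a - 1/2 * (1/5)^n * \<bar>b\<bar>" for n :: nat
  have step2: "X n \<le> G v - G 0" if v: "1 / 2^Suc n \<le> v" "v \<le> 1 / 2^n" for n v
  proof -
    have k1: "(1::nat) < 2^Suc n" using one_less_power[of "2::nat" "Suc n"] by simp
    obtain h' where h': "Hd p h'" "\<forall>u. edge_restr p h' i j u = edge_restr p h i j ((real 1 + u) / 2^Suc n)"
      "dat p h' i j k = cellN (Suc n) 1 (dat p h i j k)"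
      using cell_exists[OF H D k1] by blast
    have ext: "edge_restr p h' i j = (\<lambda>u. G ((1 + u) / 2^Suc n))" using h'(2) unfolding G_def by auto
    have cont: "continuous_on {0..1} (edge_restr p h' i j)"
    proof -
      have "continuous_on {0..1} (\<lambda>u::real. (1 + u) / 2^Suc n)" by (intro continuous_intros) auto
      moreover have "(\<lambda>u::real. (1 + u) / 2^Suc n) ` {0..1} \<subseteq> {0..1}"
      proof
        fix y assume "y \<in> (\<lambda>u::real. (1 + u) / 2^Suc n) ` {0..1}"
        then obtain u where u: "u \<in> {0..1}" "y = (1 + u) / 2^Suc n" by blast
        have "(1::real) + u \<le> 2^Suc n"
        proof -
          have "(2::real) \<le> 2 * 2^n" using one_le_power[of "2::real" n] by simp
          moreover have "u \<le> 1" using u(1) by simp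
          ultimately have "1 + u \<le> 2 * 2^n" by linarith
          then show ?thesis by simp
        qed
        then have "(1 + u) / 2^Suc n \<le> 1" by (simp add: divide_le_eq)
        moreover have "0 \<le> (1 + u) / 2^Suc n" using u(1) by simp
        ultimately show "y \<in> {0..1}" using u(2) by simp
      qed
      ultimately show ?thesis unfolding ext G_def using continuous_on_compose2[OF C] by blast
    qed
    have cd: "cellN (Suc n) 1 d = cR (cellN n 0 d)" using cellN_children[of 0 n d] by simp
    define u where "u = v * 2^Suc n - 1"
    have u01: "u \<in> {0..1}"
    proof -
      have "1 \<le> v * 2^Suc n" using v(1) by (simp add: field_simps)
      moreover have "v * 2^Suc n \<le> 2" using v(2) by (simp add: field_simps)
      ultimately show ?thesis unfolding u_def by auto
    qed
    have uv: "(1 + u) / 2^Suc n = v" unfolding u_def by simp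
    have "mn (dat p h' i j k) \<le> edge_restr p h' i j u" using MP[OF h'(1) D cont u01] .
    then have m1: "mn (cR (cellN n 0 d)) \<le> G v" using h'(3) cd uv unfolding ext d_def by simp
    have c0: "al (cellN n 0 d) = (3/5)^n * a" "be (cellN n 0 d) = (1/5)^n * b" "fst (cellN n 0 d) = fst d"
      using cellN_0[of n d] unfolding a_def b_def by auto
    have "0 \<le> al (cellN n 0 d)" using c0(1) a0 by simp
    then have m2: "fst (cellN n 0 d) + 3/10 * al (cellN n 0 d) - 1/2 * \<bar>be (cellN n 0 d)\<bar> \<le> mn (cR (cellN n 0 d))"
      by (rule mn_cR_bound)
    have "\<bar>(1/5::real)^n * b\<bar> = (1/5)^n * \<bar>b\<bar>" by (simp add: abs_mult)
    then show ?thesis using m1 m2 c0 G0 unfolding X_def by simp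
  qed
  have step3: "(G v - G 0) / v \<ge> 3/10 * (6/5)^n * a - \<bar>b\<bar> / 2"
    if v: "1 / 2^Suc n \<le> v" "v \<le> 1 / 2^n" and Xp: "3/10 * (6/5)^n * a - \<bar>b\<bar> / 2 \<ge> 0" for n v
  proof -
    have "0 < 1 / (2::real)^Suc n" by simp
    then have vp: "v > 0" using v(1) by linarith
    have e1: "X n * 2^n = 3/10 * (6/5)^n * a - 1/2 * (2/5)^n * \<bar>b\<bar>"
    proof -
      have "(3/5::real)^n * 2^n = (6/5)^n" by (simp add: power_mult_distrib[symmetric])
      moreover have "(1/5::real)^n * 2^n = (2/5)^n" by (simp add: power_mult_distrib[symmetric])
      ultimately show ?thesis unfolding X_def by (simp add: algebra_simps)
    qed
    have "(2/5::real)^n \<le> 1" by (simp add: power_le_one)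
    then have e2: "1/2 * (2/5)^n * \<bar>b\<bar> \<le> \<bar>b\<bar> / 2" by (simp add: mult_left_le_one_le)
    have Xn: "X n * 2^n \<ge> 3/10 * (6/5)^n * a - \<bar>b\<bar> / 2" using e1 e2 by linarith
    then have "0 \<le> X n * 2^n" using Xp by linarith
    moreover have "(0::real) < 2^n" by simp
    ultimately have X0: "X n \<ge> 0" by (simp add: zero_le_mult_iff)
    have inv: "2^n \<le> 1 / v" using v(2) vp by (simp add: field_simps)
    have "X n * 2^n \<le> X n * (1 / v)" using inv X0 by (rule mult_left_mono)
    also have "\<dots> \<le> (G v - G 0) / v" using step2[OF v] vp by (simp add: divide_right_mono)
    finally show ?thesis using Xn by linarith
  qed
  show ?thesis
    unfolding RT_def G_def[symmetric]
  proof
    fix B :: real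
    obtain N where N: "(\<bar>B\<bar> + \<bar>b\<bar> / 2 + 1) / (3/10 * a) < (6/5::real)^N"
      using real_arch_pow[of "6/5"] by auto
    have NN: "\<bar>B\<bar> + \<bar>b\<bar> / 2 + 1 < 3/10 * (6/5)^N * a"
      using N a0 by (simp add: field_simps)
    show "\<exists>dl>0. \<forall>s. 0 < s \<and> s < 0 + dl \<longrightarrow> B \<le> 1 * ((G s - G 0) / (s - 0))"
    proof (intro exI[of _ "1 / (2::real)^Suc N"] conjI allI impI)
      show "(0::real) < 1 / 2^Suc N" by simp
      fix s :: real assume s: "0 < s \<and> s < 0 + 1 / (2::real)^Suc N"
      have s1: "s \<le> 1"
      proof -
        have "1 / (2::real)^Suc N \<le> 1" using one_le_power[of "2::real" "Suc N"] by simp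
        then show ?thesis using s by linarith
      qed
      obtain n where n: "1 / 2^Suc n < s" "s \<le> 1 / 2^n" using exist_level[of s] s s1 by auto
      have lt: "1 / (2::real)^Suc n < 1 / 2^Suc N" using n s by linarith
      have "N < n"
      proof (rule ccontr)
        assume "\<not> N < n" then have "n \<le> N" by simp
        then have "(2::real)^Suc n \<le> 2^Suc N" by (intro power_increasing) auto
        then have "1 / (2::real)^Suc N \<le> 1 / 2^Suc n" by (intro divide_left_mono) auto
        then show False using lt by linarith
      qed
      then have "(6/5::real)^N \<le> (6/5)^n" by (intro power_increasing) auto
      then have "3/10 * (6/5)^N * a \<le> 3/10 * (6/5)^n * a" using a0 by simp
      then have big: "\<bar>B\<bar> + \<bar>b\<bar> / 2 + 1 < 3/10 * (6/5)^n * a" using NN by linarith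
      have "0 \<le> 3/10 * (6/5)^n * a - \<bar>b\<bar> / 2" using big abs_ge_zero[of B] by linarith
      then have "(G s - G 0) / s \<ge> 3/10 * (6/5)^n * a - \<bar>b\<bar> / 2"
        using step3[of n s] n by simp
      then show "B \<le> 1 * ((G s - G 0) / (s - 0))" using big by simp
    qed
  qed
qed



definition sg :: "real \<Rightarrow> real" where "sg x = (if 0 < x then 1 else -1)"

lemma sg_neg: "x \<noteq> 0 \<Longrightarrow> sg (- x) = - sg x" by (simp add: sg_def)

lemma OS:
  assumes H: "Hd p h" and D: "distinct3 i j k"
    and C: "continuous_on {0..1} (edge_restr p h i j)"
    and A: "al (dat p h i j k) \<noteq> 0"
  shows "RT (edge_restr p h i j) 0 (sg (al (dat p h i j k)))"
proof (cases "al (dat p h i j k) > 0")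
  case True
  then show ?thesis using OS_pos[OF H D C True] by (simp add: sg_def)
next
  case False
  define h' where "h' = (\<lambda>x. - h x)"
  have H': "Hd p h'" unfolding h'_def using Hd_neg[OF H] .
  have e: "edge_restr p h' i j = (\<lambda>t. - edge_restr p h i j t)" unfolding h'_def edge_restr_def by simp
  have C': "continuous_on {0..1} (edge_restr p h' i j)" unfolding e using C by (intro continuous_intros)
  have "al (dat p h' i j k) = - al (dat p h i j k)" unfolding h'_def by (simp add: dat_def al_def)
  then have A': "al (dat p h' i j k) > 0" using A False by simp
  have "RT (edge_restr p h' i j) 0 1" using OS_pos[OF H' D C' A'] .
  then have "RT (edge_restr p h i j) 0 (-1)" unfolding e RT_def by (simp add: field_simps)
  then show ?thesis using False by (simp add: sg_def)
qed

lemma RT_scale: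
  assumes r: "r > 0" and R: "RT (\<lambda>v. G (t + r * v)) 0 c"
  shows "RT G t c"
  unfolding RT_def
proof
  fix B :: real
  obtain dl where dl: "dl > 0" "\<forall>v. 0 < v \<and> v < 0 + dl \<longrightarrow> B * r \<le> c * ((G (t + r * v) - G (t + r * 0)) / (v - 0))"
    using R unfolding RT_def by blast
  show "\<exists>dl>0. \<forall>s. t < s \<and> s < t + dl \<longrightarrow> B \<le> c * ((G s - G t) / (s - t))"
  proof (intro exI[of _ "r * dl"] conjI allI impI)
    show "0 < r * dl" using r dl by simp
    fix s assume s: "t < s \<and> s < t + r * dl"
    define v where "v = (s - t) / r"
    have v0: "0 < v" "v < dl" unfolding v_def using s r by (auto simp: field_simps)
    have tv: "t + r * v = s" unfolding v_def using r by simp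
    have 1: "B * r \<le> c * ((G s - G t) / v)" using dl(2) v0 tv by auto
    define Q where "Q = c * ((G s - G t) / (s - t))"
    have 2: "c * ((G s - G t) / v) = r * Q" unfolding v_def Q_def using r s by (simp add: field_simps)
    have "r * B \<le> r * Q" using 1 2 by (simp only: mult.commute)
    then show "B \<le> c * ((G s - G t) / (s - t))" using mult_le_cancel_left_pos[OF r] unfolding Q_def by blast
  qed
qed

lemma LT_scale:
  assumes r: "r > 0" and R: "RT (\<lambda>v. G (t - r * v)) 0 c"
  shows "LT G t (- c)"
  unfolding LT_def
proof
  fix B :: real
  obtain dl where dl: "dl > 0" "\<forall>v. 0 < v \<and> v < 0 + dl \<longrightarrow> B * r \<le> c * ((G (t - r * v) - G (t - r * 0)) / (v - 0))"
    using R unfolding RT_def by blast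
  show "\<exists>dl>0. \<forall>s. t - dl < s \<and> s < t \<longrightarrow> B \<le> - c * ((G s - G t) / (s - t))"
  proof (intro exI[of _ "r * dl"] conjI allI impI)
    show "0 < r * dl" using r dl by simp
    fix s assume s: "t - r * dl < s \<and> s < t"
    define v where "v = (t - s) / r"
    have v0: "0 < v" "v < dl" unfolding v_def using s r by (auto simp: field_simps)
    have tv: "t - r * v = s" unfolding v_def using r by simp
    have 1: "B * r \<le> c * ((G s - G t) / v)" using dl(2) v0 tv by auto
    define Q where "Q = - c * ((G s - G t) / (s - t))"
    have 2: "c * ((G s - G t) / v) = r * Q" unfolding v_def Q_def using r s by (simp add: field_simps)
    have "r * B \<le> r * Q" using 1 2 by (simp only: mult.commute)
    then show "B \<le> - c * ((G s - G t) / (s - t))" using mult_le_cancel_left_pos[OF r] unfolding Q_def by blast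
  qed
qed

lemma ID_ev:
  assumes t: "t \<in> {0..1}" and R: "t < 1 \<Longrightarrow> RT G t c" and L: "0 < t \<Longrightarrow> LT G t c"
  shows "eventually (\<lambda>s. B \<le> c * ((G s - G t) / (s - t))) (at t within {0..1})"
proof -
  have "\<exists>d1>0. t < 1 \<longrightarrow> (\<forall>s. t < s \<and> s < t + d1 \<longrightarrow> B \<le> c * ((G s - G t) / (s - t)))"
  proof (cases "t < 1")
    case True then show ?thesis using R unfolding RT_def by blast
  next
    case False then show ?thesis by (intro exI[of _ 1]) auto
  qed
  then obtain d1 where d1: "d1 > 0" "t < 1 \<longrightarrow> (\<forall>s. t < s \<and> s < t + d1 \<longrightarrow> B \<le> c * ((G s - G t) / (s - t)))"
    by blast
  have "\<exists>d2>0. 0 < t \<longrightarrow> (\<forall>s. t - d2 < s \<and> s < t \<longrightarrow> B \<le> c * ((G s - G t) / (s - t)))"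
  proof (cases "0 < t")
    case True then show ?thesis using L unfolding LT_def by blast
  next
    case False then show ?thesis by (intro exI[of _ 1]) auto
  qed
  then obtain d2 where d2: "d2 > 0" "0 < t \<longrightarrow> (\<forall>s. t - d2 < s \<and> s < t \<longrightarrow> B \<le> c * ((G s - G t) / (s - t)))"
    by blast
  show ?thesis
    unfolding eventually_at
  proof (intro exI[of _ "min d1 d2"] conjI ballI impI)
    show "0 < min d1 d2" using d1 d2 by simp
    fix s assume s: "s \<in> {0..1}" "s \<noteq> t \<and> dist s t < min d1 d2"
    have ds: "\<bar>s - t\<bar> < d1" "\<bar>s - t\<bar> < d2" using s(2) by (auto simp: dist_real_def)
    show "B \<le> c * ((G s - G t) / (s - t))"
    proof (cases "t < s")
      case True
      then have "t < 1" using s(1) by auto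
      moreover have "s < t + d1" using ds by linarith
      ultimately show ?thesis using d1(2) True by blast
    next
      case False
      then have "s < t" using s(2) by auto
      then have "0 < t" using s(1) by auto
      moreover have "t - d2 < s" using ds by linarith
      ultimately show ?thesis using d2(2) \<open>s < t\<close> by blast
    qed
  qed
qed

lemma ID_from:
  assumes t: "t \<in> {0..1}" and c: "c = 1 \<or> c = -1"
    and R: "t < 1 \<Longrightarrow> RT G t c" and L: "0 < t \<Longrightarrow> LT G t c"
  shows "infinite_deriv G t"
proof -
  have ev: "\<And>B. eventually (\<lambda>s. B \<le> c * ((G s - G t) / (s - t))) (at t within {0..1})"
    using ID_ev[OF t R L] by blast
  show ?thesis
  proof (cases "c = 1")
    case True
    have "filterlim (\<lambda>s. (G s - G t) / (s - t)) at_top (at t within {0..1})"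
      unfolding filterlim_at_top using ev True by simp
    then show ?thesis unfolding infinite_deriv_def by blast
  next
    case False
    then have c1: "c = -1" using c by simp
    have "filterlim (\<lambda>s. (G s - G t) / (s - t)) at_bot (at t within {0..1})"
      unfolding filterlim_at_bot
    proof
      fix Z
      show "eventually (\<lambda>s. (G s - G t) / (s - t) \<le> Z) (at t within {0..1})"
        using ev[of "- Z"] unfolding c1 by (rule eventually_mono) linarith
    qed
    then show ?thesis unfolding infinite_deriv_def by blast
  qed
qed

lemma cont_aff:
  assumes C: "continuous_on {0..1} G" and im: "\<And>u. u \<in> {0..1} \<Longrightarrow> a + m * u \<in> {0..1::real}"
  shows "continuous_on {0..1} (\<lambda>u. G (a + m * u))"
proof -
  have "continuous_on {0..1} (\<lambda>u::real. a + m * u)" by (intro continuous_intros)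
  moreover have "(\<lambda>u. a + m * u) ` {0..1} \<subseteq> {0..1}" using im by blast
  ultimately show ?thesis using continuous_on_compose2[OF C] by blast
qed

lemma Key:
  assumes H: "Hd p h" and D: "distinct3 i j k"
    and C: "continuous_on {0..1} (edge_restr p h i j)"
    and K: "k0 \<le> 2^n" and NF: "\<not> Fail n k0 (dat p h i j k)"
  shows "infinite_deriv (edge_restr p h i j) (real k0 / 2^n)"
proof -
  define G where "G = edge_restr p h i j"
  define d where "d = dat p h i j k"
  define t where "t = real k0 / 2^n"
  define r where "r = 1 / (2::real)^n"
  have r0: "r > 0" unfolding r_def by simp
  have kr: "real k0 \<le> 2^n" using K by (metis of_nat_le_iff of_nat_numeral of_nat_power)
  have t01: "t \<in> {0..1}" unfolding t_def using kr by simp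
  have t1: "t < 1 \<longleftrightarrow> k0 < 2^n"
  proof -
    have "t < 1 \<longleftrightarrow> real k0 < 2^n" unfolding t_def by (simp add: divide_less_eq)
    also have "\<dots> \<longleftrightarrow> k0 < 2^n" by (metis of_nat_less_iff of_nat_numeral of_nat_power)
    finally show ?thesis .
  qed
  have t0: "0 < t \<longleftrightarrow> 0 < k0" unfolding t_def by (simp add: zero_less_divide_iff)
  have right: "RT G t (sg (al (cellN n k0 d)))" if k: "k0 < 2^n"
  proof -
    have A: "al (cellN n k0 d) \<noteq> 0" using NF k unfolding Fail_def d_def by simp
    obtain h' where h': "Hd p h'" "\<forall>u. edge_restr p h' i j u = edge_restr p h i j ((real k0 + u) / 2^n)"
      "dat p h' i j k = cellN n k0 (dat p h i j k)"
      using cell_exists[OF H D k] by blast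
    have e: "edge_restr p h' i j = (\<lambda>u. G (t + r * u))"
      using h'(2) unfolding G_def t_def r_def by (auto simp: field_simps)
    have kr1: "real k0 + 1 \<le> 2^n" using k by (metis Suc_leI of_nat_Suc of_nat_le_iff of_nat_numeral of_nat_power add.commute)
    have C': "continuous_on {0..1} (edge_restr p h' i j)" unfolding e
    proof (rule cont_aff[OF C[folded G_def]])
      fix u :: real assume u: "u \<in> {0..1}"
      have "t + r * u \<le> (real k0 + 1) / 2^n" unfolding t_def r_def using u by (simp add: field_simps)
      also have "\<dots> \<le> 1" using kr1 by simp
      finally show "t + r * u \<in> {0..1}" using u r0 t01 by simp
    qed
    have "RT (edge_restr p h' i j) 0 (sg (al (dat p h' i j k)))"
      using OS[OF h'(1) D C'] A h'(3) unfolding d_def by simp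
    then have "RT (\<lambda>u. G (t + r * u)) 0 (sg (al (cellN n k0 d)))" using h'(3) unfolding e d_def by simp
    then show ?thesis using RT_scale[OF r0] by blast
  qed
  have left: "LT G t (- sg (ar (cellN n (k0 - 1) d)))" if k: "0 < k0"
  proof -
    have kk: "k0 - 1 < 2^n" using k K by simp
    have A: "ar (cellN n (k0 - 1) d) \<noteq> 0"
    proof (cases "k0 < 2^n")
      case True
      then have "al (cellN n k0 d) \<noteq> 0" using NF unfolding Fail_def d_def by simp
      then show ?thesis using cellN_adj[OF k True] by simp
    next
      case False
      then show ?thesis using NF unfolding Fail_def d_def by simp
    qed
    obtain h' where h': "Hd p h'" "\<forall>u. edge_restr p h' i j u = edge_restr p h i j ((real (k0 - 1) + u) / 2^n)"
      "dat p h' i j k = cellN n (k0 - 1) (dat p h i j k)"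
      using cell_exists[OF H D kk] by blast
    have D': "distinct3 j i k" using distinct3_perm[OF D] by simp
    have rk: "real (k0 - 1) = real k0 - 1" using k by (simp add: of_nat_diff)
    have e: "edge_restr p h' j i = (\<lambda>u. G (t - r * u))"
    proof
      fix u
      have "edge_restr p h' j i u = edge_restr p h' i j (1 - u)" by (rule er_rev)
      also have "\<dots> = G ((real k0 - 1 + (1 - u)) / 2^n)" using h'(2) rk unfolding G_def by simp
      also have "(real k0 - 1 + (1 - u)) / 2^n = t - r * u" unfolding t_def r_def by (simp add: field_simps)
      finally show "edge_restr p h' j i u = G (t - r * u)" .
    qed
    have kr1: "1 \<le> real k0" using k by simp
    have C': "continuous_on {0..1} (edge_restr p h' j i)" unfolding e
    proof -
      have "continuous_on {0..1} (\<lambda>u. G (t + (- r) * u))"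
      proof (rule cont_aff[OF C[folded G_def]])
        fix u :: real assume u: "u \<in> {0..1}"
        have "(real k0 - 1) / 2^n \<le> t + (- r) * u" unfolding t_def r_def using u by (simp add: field_simps)
        moreover have "0 \<le> (real k0 - 1) / 2^n" using kr1 by simp
        moreover have "t + (- r) * u \<le> t" using u r0 by simp
        ultimately show "t + (- r) * u \<in> {0..1}" using t01 by auto
      qed
      then show "continuous_on {0..1} (\<lambda>u. G (t - r * u))" by simp
    qed
    have "al (dat p h' j i k) = ar (dat p h' i j k)" by (simp add: dat_def al_def ar_def)
    then have "al (dat p h' j i k) = ar (cellN n (k0 - 1) d)" using h'(3) unfolding d_def by simp
    then have "RT (edge_restr p h' j i) 0 (sg (ar (cellN n (k0 - 1) d)))"
      using OS[OF h'(1) D' C'] A by simp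
    then have "RT (\<lambda>u. G (t - r * u)) 0 (sg (ar (cellN n (k0 - 1) d)))" unfolding e .
    then show ?thesis using LT_scale[OF r0] by blast
  qed
  define c where "c = (if k0 < 2^n then sg (al (cellN n k0 d)) else - sg (ar (cellN n (k0 - 1) d)))"
  have c: "c = 1 \<or> c = -1" unfolding c_def sg_def by auto
  have R: "RT G t c" if "t < 1" using right t1 that unfolding c_def by simp
  have L: "LT G t c" if "0 < t"
  proof (cases "k0 < 2^n")
    case True
    have k: "0 < k0" using that t0 by simp
    have "al (cellN n k0 d) \<noteq> 0" using NF True unfolding Fail_def d_def by simp
    then have "- sg (ar (cellN n (k0 - 1) d)) = sg (al (cellN n k0 d))"
      using cellN_adj[OF k True] sg_neg by simp
    then show ?thesis using left[OF k] True unfolding c_def by simp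
  next
    case False
    then show ?thesis using left that t0 unfolding c_def by simp
  qed
  show ?thesis using ID_from[OF t01 c R L] unfolding G_def t_def .
qed



definition P :: "(nat \<Rightarrow> complex) \<Rightarrow> nat \<Rightarrow> nat \<Rightarrow> real \<Rightarrow> complex" where
  "P p i j t = p i + of_real t * (p j - p i)"

definition cA :: "nat \<Rightarrow> nat \<Rightarrow> real \<Rightarrow> real" where
  "cA i j t = (if i = 0 \<and> j = 1 then t else if i = 0 then 0 else 1 - t)"
definition cB :: "nat \<Rightarrow> nat \<Rightarrow> real \<Rightarrow> real" where
  "cB i j t = (if i = 0 \<and> j = 1 then 0 else t)"

lemma edge_cases: "i < j \<Longrightarrow> j < (3::nat) \<Longrightarrow> (i = 0 \<and> j = 1) \<or> (i = 0 \<and> j = 2) \<or> (i = 1 \<and> j = 2)"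
  by auto

lemma P_coord: "i < j \<Longrightarrow> j < 3 \<Longrightarrow>
   P p i j t = p 0 + of_real (cA i j t) * (p 1 - p 0) + of_real (cB i j t) * (p 2 - p 0)"
proof -
  assume "i < j" "j < 3"
  then consider "i = 0 \<and> j = 1" | "i = 0 \<and> j = 2" | "i = 1 \<and> j = 2" using edge_cases by blast
  then show ?thesis
    by cases (simp_all add: P_def cA_def cB_def algebra_simps of_real_diff)
qed

lemma indep:
  assumes U: "unit_equilateral p" and e: "of_real a * (p 1 - p 0) + of_real b * (p 2 - p 0) = 0"
  shows "a = 0 \<and> b = 0"
proof -
  have all: "\<And>i j. i < 3 \<Longrightarrow> j < 3 \<Longrightarrow> i \<noteq> j \<Longrightarrow> dist (p i) (p j) = 1"
    using U unfolding unit_equilateral_def by blast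
  have d01: "norm (p 1 - p 0) = 1" using all[of 1 0] by (simp add: dist_norm)
  have d02: "norm (p 2 - p 0) = 1" using all[of 2 0] by (simp add: dist_norm)
  have d12: "norm (p 2 - p 1) = 1" using all[of 2 1] by (simp add: dist_norm)
  define u where "u = p 1 - p 0"
  define v where "v = p 2 - p 0"
  have e': "of_real a * u + of_real b * v = 0" using e unfolding u_def v_def .
  show ?thesis
  proof (cases "b = 0")
    case True
    then have "of_real a * u = 0" using e' by simp
    then have "a = 0" using d01 unfolding u_def by auto
    then show ?thesis using True by simp
  next
    case False
    define c where "c = - a / b"
    have vc: "v = of_real c * u"
    proof -
      have "of_real b * v = (of_real a * u + of_real b * v) - of_real a * u" by simp
      also have "\<dots> = - (of_real a * u)" using e' by simp
      finally have "of_real b * v = - (of_real a * u)" .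
      then have "v = - (of_real a * u) / of_real b" using False by (simp add: field_simps)
      then show ?thesis unfolding c_def by (simp add: field_simps)
    qed
    have "norm v = \<bar>c\<bar>" using d01 unfolding vc u_def by (simp add: norm_mult)
    then have c1: "\<bar>c\<bar> = 1" using d02 unfolding v_def by simp
    have "p 2 - p 1 = v - u" unfolding u_def v_def by simp
    also have "\<dots> = of_real (c - 1) * u" unfolding vc by (simp add: algebra_simps)
    finally have e2: "p 2 - p 1 = of_real (c - 1) * u" .
    have "norm (p 2 - p 1) = \<bar>c - 1\<bar> * norm u" unfolding e2 by (simp only: norm_mult norm_of_real)
    then have "norm (p 2 - p 1) = \<bar>c - 1\<bar>" using d01 unfolding u_def by simp
    then have "\<bar>c - 1\<bar> = 1" using d12 by simp
    then show ?thesis using c1 by (auto simp: abs_if split: if_splits)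
  qed
qed

lemma P_eq:
  assumes U: "unit_equilateral p" and ij: "i < j" "j < 3" and ij': "i' < j'" "j' < 3"
    and t: "t \<in> {0..1}" and t': "t' \<in> {0..1}" and E: "P p i j t = P p i' j' t'"
  shows "(i = i' \<and> j = j' \<and> t = t') \<or> t = 0 \<or> t = 1"
proof -
  have "of_real (cA i j t - cA i' j' t') * (p 1 - p 0) + of_real (cB i j t - cB i' j' t') * (p 2 - p 0) = 0"
    using E P_coord[OF ij, of p t] P_coord[OF ij', of p t'] by (simp add: algebra_simps of_real_diff)
  then have "cA i j t - cA i' j' t' = 0 \<and> cB i j t - cB i' j' t' = 0" by (rule indep[OF U])
  then have c: "cA i j t = cA i' j' t'" "cB i j t = cB i' j' t'" by auto
  have c2: "i' = 0 \<and> j' = 1 \<or> i' = 0 \<and> j' = 2 \<or> i' = 1 \<and> j' = 2" using edge_cases ij' by blast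
  consider "i = 0 \<and> j = 1" | "i = 0 \<and> j = 2" | "i = 1 \<and> j = 2" using edge_cases ij by blast
  then show ?thesis
  proof cases
    case 1 then show ?thesis using c2 c t t' unfolding cA_def cB_def by auto
  next
    case 2 then show ?thesis using c2 c t t' unfolding cA_def cB_def by auto
  next
    case 3 then show ?thesis using c2 c t t' unfolding cA_def cB_def by auto
  qed
qed

lemma sign3: "a + b + c = (0::real) \<Longrightarrow> 0 \<le> a * b \<Longrightarrow> 0 \<le> a * c \<Longrightarrow> a = 0"
proof -
  assume h: "a + b + c = 0" "0 \<le> a * b" "0 \<le> a * c"
  have "a * a + a * b + a * c = a * (a + b + c)" by (simp add: algebra_simps)
  then have "a * a + a * b + a * c = 0" using h(1) by simp
  then have "a * a \<le> 0" using h by linarith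
  then show "a = 0" by (simp add: mult_le_0_iff) (metis less_le not_less mult_pos_neg mult_neg_pos)
qed

definition Bad :: "(nat \<Rightarrow> complex) \<Rightarrow> (complex \<Rightarrow> real) \<Rightarrow> nat \<Rightarrow> nat \<Rightarrow> nat \<Rightarrow> nat \<Rightarrow> bool" where
  "Bad p f i j n k \<longleftrightarrow> i < j \<and> j < 3 \<and> k \<le> 2^n \<and> Fail n k (dat p f i j (3 - i - j))"

definition LL :: "(nat \<Rightarrow> complex) \<Rightarrow> (complex \<Rightarrow> real) \<Rightarrow> nat \<Rightarrow> real" where
  "LL p f v = 3 * f (p v) - (f (p 0) + f (p 1) + f (p 2))"

lemma LL_sum: "LL p f 0 + LL p f 1 + LL p f 2 = 0" by (simp add: LL_def)

lemma ncst_dat: "\<not> (f (p 0) = f (p 1) \<and> f (p 1) = f (p 2)) \<Longrightarrow> i < j \<Longrightarrow> j < 3 \<Longrightarrow> ncst (dat p f i j (3 - i - j))"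
proof -
  assume a: "\<not> (f (p 0) = f (p 1) \<and> f (p 1) = f (p 2))" "i < j" "j < 3"
  consider "i = 0 \<and> j = 1" | "i = 0 \<and> j = 2" | "i = 1 \<and> j = 2" using edge_cases a by blast
  then show ?thesis using a(1) by cases (auto simp: ncst_def dat_def)
qed

lemma Bad_facts:
  assumes B: "Bad p f i j n k" and nc: "\<not> (f (p 0) = f (p 1) \<and> f (p 1) = f (p 2))"
  shows "0 \<le> LL p f i * LL p f j \<and> (k < 2^n \<longrightarrow> LL p f j \<noteq> 0) \<and> (0 < k \<longrightarrow> LL p f i \<noteq> 0)"
proof -
  have b: "i < j" "j < 3" "k \<le> 2^n" "Fail n k (dat p f i j (3 - i - j))" using B unfolding Bad_def by auto
  have F: "0 \<le> al (dat p f i j (3 - i - j)) * ar (dat p f i j (3 - i - j)) \<and>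
    (k < 2^n \<longrightarrow> ar (dat p f i j (3 - i - j)) \<noteq> 0) \<and> (0 < k \<longrightarrow> al (dat p f i j (3 - i - j)) \<noteq> 0)"
    using Fail_pos[OF b(4) b(3) ncst_dat[OF nc b(1,2)]] .
  have "al (dat p f i j (3 - i - j)) = - LL p f i \<and> ar (dat p f i j (3 - i - j)) = - LL p f j"
  proof -
    consider "i = 0 \<and> j = 1" | "i = 0 \<and> j = 2" | "i = 1 \<and> j = 2" using edge_cases b by blast
    then show ?thesis by cases (auto simp: al_def ar_def dat_def LL_def)
  qed
  then show ?thesis using F by simp
qed

lemma Bad_left: "Bad p f i j n k \<Longrightarrow> \<not> (f (p 0) = f (p 1) \<and> f (p 1) = f (p 2)) \<Longrightarrow> LL p f i = 0 \<Longrightarrow>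
   P p i j (real k / 2^n) = p i"
  using Bad_facts[of p f i j n k] by (auto simp: P_def)

lemma Bad_right: "Bad p f i j n k \<Longrightarrow> \<not> (f (p 0) = f (p 1) \<and> f (p 1) = f (p 2)) \<Longrightarrow> LL p f j = 0 \<Longrightarrow>
   P p i j (real k / 2^n) = p j"
proof -
  assume a: "Bad p f i j n k" "\<not> (f (p 0) = f (p 1) \<and> f (p 1) = f (p 2))" "LL p f j = 0"
  have "k \<le> 2^n" using a(1) unfolding Bad_def by simp
  moreover have "\<not> k < 2^n" using Bad_facts[OF a(1,2)] a(3) by auto
  ultimately have "k = 2^n" by simp
  then show ?thesis by (simp add: P_def)
qed

lemma Fail_lift: "k \<le> 2^n \<Longrightarrow> Fail n k d \<Longrightarrow> Fail (n + m) (k * 2^m) d"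
proof (induction m)
  case 0 then show ?case by simp
next
  case (Suc m)
  have "k * 2^m \<le> 2^(n+m)" using Suc.prems by (simp add: power_add)
  then have "Fail (Suc (n + m)) (2 * (k * 2^m)) d \<longleftrightarrow> Fail (n + m) (k * 2^m) d" by (rule Fail_double)
  then show ?case using Suc by (simp add: mult.commute mult.left_commute)
qed

lemma two_bad:
  assumes B1: "Bad p f i j n k" and B2: "Bad p f i' j' n' k'" and nc: "\<not> (f (p 0) = f (p 1) \<and> f (p 1) = f (p 2))"
  shows "P p i j (real k / 2^n) = P p i' j' (real k' / 2^n')"
proof -
  have b1: "i < j" "j < 3" "k \<le> 2^n" "Fail n k (dat p f i j (3 - i - j))" using B1 unfolding Bad_def by auto
  have b2: "i' < j'" "j' < 3" "k' \<le> 2^n'" "Fail n' k' (dat p f i' j' (3 - i' - j'))" using B2 unfolding Bad_def by auto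
  have f1: "0 \<le> LL p f i * LL p f j" using Bad_facts[OF B1 nc] by simp
  have f2: "0 \<le> LL p f i' * LL p f j'" using Bad_facts[OF B2 nc] by simp
  have S: "LL p f 0 + LL p f 1 + LL p f 2 = 0" by (rule LL_sum)
  show ?thesis
  proof (cases "i = i' \<and> j = j'")
    case True
    then have b2': "Fail n' k' (dat p f i j (3 - i - j))" using b2 by simp
    have F1: "Fail (n + n') (k * 2^n') (dat p f i j (3 - i - j))" using Fail_lift[OF b1(3,4)] .
    have F2: "Fail (n' + n) (k' * 2^n) (dat p f i j (3 - i - j))" using Fail_lift[OF b2(3) b2'] .
    have l1: "k * 2^n' \<le> 2^(n + n')" using b1(3) by (simp add: power_add)
    have l2: "k' * 2^n \<le> 2^(n + n')" using b2(3) by (simp add: power_add mult.commute)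
    have "k * 2^n' = k' * 2^n" using Fail_uniq[OF F1 _ l1 l2 ncst_dat[OF nc b1(1,2)]] F2 by (simp add: add.commute)
    then have "real k * 2^n' = real k' * 2^n" by (metis of_nat_mult of_nat_numeral of_nat_power)
    then have "real k / 2^n = real k' / 2^n'" by (simp add: field_simps)
    then show ?thesis using True by simp
  next
    case False
    have c2: "i' = 0 \<and> j' = 1 \<or> i' = 0 \<and> j' = 2 \<or> i' = 1 \<and> j' = 2" using edge_cases b2 by blast
    consider "i = 0 \<and> j = 1" | "i = 0 \<and> j = 2" | "i = 1 \<and> j = 2" using edge_cases b1 by blast
    then show ?thesis
    proof cases
      case 1
      show ?thesis using c2
      proof (elim disjE)
        assume "i' = 0 \<and> j' = 1" then show ?thesis using False 1 by simp
      next
        assume c: "i' = 0 \<and> j' = 2"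
        have "LL p f 0 = 0" using sign3[of "LL p f 0" "LL p f 1" "LL p f 2"] S f1 f2 1 c by simp
        then show ?thesis using Bad_left[OF B1 nc] Bad_left[OF B2 nc] 1 c by simp
      next
        assume c: "i' = 1 \<and> j' = 2"
        have "LL p f 1 = 0" using sign3[of "LL p f 1" "LL p f 0" "LL p f 2"] S f1 f2 1 c by (simp add: mult.commute)
        then show ?thesis using Bad_right[OF B1 nc] Bad_left[OF B2 nc] 1 c by simp
      qed
    next
      case 2
      show ?thesis using c2
      proof (elim disjE)
        assume c: "i' = 0 \<and> j' = 1"
        have "LL p f 0 = 0" using sign3[of "LL p f 0" "LL p f 1" "LL p f 2"] S f1 f2 2 c by simp
        then show ?thesis using Bad_left[OF B1 nc] Bad_left[OF B2 nc] 2 c by simp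
      next
        assume "i' = 0 \<and> j' = 2" then show ?thesis using False 2 by simp
      next
        assume c: "i' = 1 \<and> j' = 2"
        have "LL p f 2 = 0" using sign3[of "LL p f 2" "LL p f 0" "LL p f 1"] S f1 f2 2 c by (simp add: mult.commute)
        then show ?thesis using Bad_right[OF B1 nc] Bad_right[OF B2 nc] 2 c by simp
      qed
    next
      case 3
      show ?thesis using c2
      proof (elim disjE)
        assume c: "i' = 0 \<and> j' = 1"
        have "LL p f 1 = 0" using sign3[of "LL p f 1" "LL p f 0" "LL p f 2"] S f1 f2 3 c by (simp add: mult.commute)
        then show ?thesis using Bad_left[OF B1 nc] Bad_right[OF B2 nc] 3 c by simp
      next
        assume c: "i' = 0 \<and> j' = 2"
        have "LL p f 2 = 0" using sign3[of "LL p f 2" "LL p f 0" "LL p f 1"] S f1 f2 3 c by (simp add: mult.commute)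
        then show ?thesis using Bad_right[OF B1 nc] Bad_right[OF B2 nc] 3 c by simp
      next
        assume "i' = 1 \<and> j' = 2" then show ?thesis using False 3 by simp
      qed
    qed
  qed
qed

lemma dyadic_nat: "dyadic t \<Longrightarrow> t \<in> {0..1} \<Longrightarrow> \<exists>n k. k \<le> 2^n \<and> t = real k / 2^n"
proof -
  assume d: "dyadic t" and t: "t \<in> {0..1}"
  obtain k :: int and n :: nat where kn: "t = of_int k / 2^n" using d unfolding dyadic_def by blast
  have "0 \<le> of_int k / (2::real)^n" using t kn by simp
  moreover have "(of_int k::real) = (of_int k / (2::real)^n) * 2^n" by simp
  ultimately have "0 \<le> (of_int k::real)" by (metis mult_nonneg_nonneg zero_le_numeral zero_le_power)
  then have k0: "0 \<le> k" by simp
  have "of_int k / (2::real)^n \<le> 1" using t kn by simp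
  then have "of_int k \<le> (2::real)^n" by (simp add: divide_le_eq)
  then have "real (nat k) \<le> 2^n" using k0 by simp
  then have "nat k \<le> 2^n" by (metis of_nat_le_iff of_nat_numeral of_nat_power)
  moreover have "t = real (nat k) / 2^n" using kn k0 by simp
  ultimately show ?thesis by blast
qed

lemma bad_point:
  assumes U: "unit_equilateral p" and H: "SG_harmonic p f"
    and x: "x \<in> contour_junctions p" and ng: "\<not> good_point p f x"
  shows "\<exists>i j n k. Bad p f i j n k \<and> x = P p i j (real k / 2^n)"
proof -
  obtain i j t where g: "i < j" "j < 3" "t \<in> {0..1}" "x = P p i j t" "\<not> infinite_deriv (edge_restr p f i j) t"
    using ng unfolding good_point_def P_def by blast
  obtain i' j' t' where c: "i' < j'" "j' < 3" "t' \<in> {0..1}" "dyadic t'" "x = P p i' j' t'"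
    using x unfolding contour_junctions_def P_def by blast
  have "(i = i' \<and> j = j' \<and> t = t') \<or> t = 0 \<or> t = 1" using P_eq[OF U g(1,2) c(1,2) g(3) c(3)] g(4) c(5) by simp
  then have "dyadic t" using c(4) unfolding dyadic_def
    by (elim disjE) (auto intro: exI[of _ 0] exI[of _ 1])
  then obtain n k where nk: "k \<le> 2^n" "t = real k / 2^n" using dyadic_nat g(3) by blast
  have D: "distinct3 i j (3 - i - j)"
  proof -
    consider "i = 0 \<and> j = 1" | "i = 0 \<and> j = 2" | "i = 1 \<and> j = 2" using edge_cases g(1,2) by blast
    then show ?thesis by cases (auto simp: distinct3_def)
  qed
  have Hd: "Hd p f" using harm_Hd[OF H] .
  have C: "continuous_on {0..1} (edge_restr p f i j)"
    using G_cont[of p f i j] H g(1,2) unfolding SG_harmonic_def by simp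
  have "Fail n k (dat p f i j (3 - i - j))" using Key[OF Hd D C nk(1)] g(5) nk(2) by blast
  then have "Bad p f i j n k" using g nk unfolding Bad_def by simp
  then show ?thesis using g(4) nk(2) by blast
qed

lemma part2:
  assumes U: "unit_equilateral p" and H: "SG_harmonic p f"
    and nc: "\<exists>x\<in>SG p. \<exists>y\<in>SG p. f x \<noteq> f y"
    and x: "x \<in> contour_junctions p" "\<not> good_point p f x"
    and y: "y \<in> contour_junctions p" "\<not> good_point p f y"
  shows "x = y"
proof -
  have nc': "\<not> (f (p 0) = f (p 1) \<and> f (p 1) = f (p 2))"
  proof
    assume e: "f (p 0) = f (p 1) \<and> f (p 1) = f (p 2)"
    have "\<forall>z\<in>SG p. f z = f (p 0)"
      using const_SG[OF harm_Hd[OF H] _ ] H e unfolding SG_harmonic_def by blast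
    then show False using nc by auto
  qed
  obtain i j n k where 1: "Bad p f i j n k" "x = P p i j (real k / 2^n)" using bad_point[OF U H x] by blast
  obtain i' j' n' k' where 2: "Bad p f i' j' n' k'" "y = P p i' j' (real k' / 2^n')" using bad_point[OF U H y] by blast
  show ?thesis using two_bad[OF 1(1) 2(1) nc'] 1(2) 2(2) by simp
qed



lemma deriv0_not_inf:
  assumes d: "(g has_real_derivative 0) (at t within {0..1})" and t: "t \<in> {0..1::real}"
  shows "\<not> infinite_deriv g t"
proof
  assume I: "infinite_deriv g t"
  have T: "((\<lambda>s. (g s - g t) / (s - t)) \<longlongrightarrow> 0) (at t within {0..1})"
    using d unfolding has_field_derivative_iff .
  have nb: "at t within {0..1} \<noteq> bot"
  proof -
    have "t islimpt {0..1::real}" using t by simp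
    then show ?thesis using trivial_limit_within by blast
  qed
  have "filterlim (\<lambda>s. (g s - g t) / (s - t)) at_infinity (at t within {0..1})"
    using I unfolding infinite_deriv_def
    by (auto intro: filterlim_at_top_imp_at_infinity filterlim_mono[OF _ at_bot_le_at_infinity order_refl])
  then show False using not_tendsto_and_filterlim_at_infinity[OF nb T] by blast
qed

theorem lemma6:
  fixes p :: "nat \<Rightarrow> complex" and f :: "complex \<Rightarrow> real"
  assumes "unit_equilateral p"
    and "SG_harmonic p f"
    and "\<exists>x\<in>SG p. \<exists>y\<in>SG p. f x \<noteq> f y"
  shows "(\<forall>s t. s \<in> {0..1} \<and> dyadic s \<and> \<not> infinite_deriv (edge_restr p f 1 2) s \<longrightarrow>
               t \<in> {0..1} \<and> dyadic t \<and> \<not> infinite_deriv (edge_restr p f 1 2) t \<longrightarrow> s = t)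
      \<and> (\<forall>x y. x \<in> contour_junctions p \<and> \<not> good_point p f x \<longrightarrow>
               y \<in> contour_junctions p \<and> \<not> good_point p f y \<longrightarrow> x = y)
      \<and> (\<forall>x y. (x \<in> contour_junctions p \<and> (\<exists>i j t. i < j \<and> j < 3 \<and> t \<in> {0..1} \<and>
                   x = p i + of_real t * (p j - p i) \<and>
                   (edge_restr p f i j has_real_derivative 0) (at t within {0..1}))) \<longrightarrow>
               (y \<in> contour_junctions p \<and> (\<exists>i j t. i < j \<and> j < 3 \<and> t \<in> {0..1} \<and>
                   y = p i + of_real t * (p j - p i) \<and>
                   (edge_restr p f i j has_real_derivative 0) (at t within {0..1}))) \<longrightarrow> x = y)"
proof -
  have P2: "\<And>x y. x \<in> contour_junctions p \<Longrightarrow> \<not> good_point p f x \<Longrightarrow>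
      y \<in> contour_junctions p \<Longrightarrow> \<not> good_point p f y \<Longrightarrow> x = y"
    using part2[OF assms] by blast
  have ng: "\<not> good_point p f x"
    if "i < j" "j < 3" "t \<in> {0..1}" "x = p i + of_real t * (p j - p i)" "\<not> infinite_deriv (edge_restr p f i j) t"
    for x i j t
    using that unfolding good_point_def by blast
  have cj: "p i + of_real t * (p j - p i) \<in> contour_junctions p"
    if "i < j" "j < 3" "t \<in> {0..1}" "dyadic t" for i j t
    using that unfolding contour_junctions_def by blast
  have p12: "p 2 - p 1 \<noteq> 0"
  proof -
    have "dist (p 1) (p 2) = 1" using assms(1) unfolding unit_equilateral_def by auto
    then show ?thesis by auto
  qed
  have part1: "\<forall>s t. s \<in> {0..1} \<and> dyadic s \<and> \<not> infinite_deriv (edge_restr p f 1 2) s \<longrightarrow>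
               t \<in> {0..1} \<and> dyadic t \<and> \<not> infinite_deriv (edge_restr p f 1 2) t \<longrightarrow> s = t"
  proof (intro allI impI)
    fix s t
    assume s: "s \<in> {0..1} \<and> dyadic s \<and> \<not> infinite_deriv (edge_restr p f 1 2) s"
      and t: "t \<in> {0..1} \<and> dyadic t \<and> \<not> infinite_deriv (edge_restr p f 1 2) t"
    have "p 1 + of_real s * (p 2 - p 1) = p 1 + of_real t * (p 2 - p 1)"
      using P2[OF cj[of 1 2 s] ng[of 1 2 s] cj[of 1 2 t] ng[of 1 2 t]] s t by simp
    then have "of_real s * (p 2 - p 1) = of_real t * (p 2 - p 1)" by simp
    then have "(of_real s :: complex) = of_real t" using p12 by simp
    then show "s = t" by simp
  qed
  have part3: "\<forall>x y. (x \<in> contour_junctions p \<and> (\<exists>i j t. i < j \<and> j < 3 \<and> t \<in> {0..1} \<and>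
                   x = p i + of_real t * (p j - p i) \<and>
                   (edge_restr p f i j has_real_derivative 0) (at t within {0..1}))) \<longrightarrow>
               (y \<in> contour_junctions p \<and> (\<exists>i j t. i < j \<and> j < 3 \<and> t \<in> {0..1} \<and>
                   y = p i + of_real t * (p j - p i) \<and>
                   (edge_restr p f i j has_real_derivative 0) (at t within {0..1}))) \<longrightarrow> x = y"
  proof (intro allI impI)
    fix x y
    assume x: "x \<in> contour_junctions p \<and> (\<exists>i j t. i < j \<and> j < 3 \<and> t \<in> {0..1} \<and>
                   x = p i + of_real t * (p j - p i) \<and>
                   (edge_restr p f i j has_real_derivative 0) (at t within {0..1}))"
      and y: "y \<in> contour_junctions p \<and> (\<exists>i j t. i < j \<and> j < 3 \<and> t \<in> {0..1} \<and>
                   y = p i + of_real t * (p j - p i) \<and>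
                   (edge_restr p f i j has_real_derivative 0) (at t within {0..1}))"
    obtain i j t where xi: "i < j" "j < 3" "t \<in> {0..1}" "x = p i + of_real t * (p j - p i)"
      "(edge_restr p f i j has_real_derivative 0) (at t within {0..1})" using x by blast
    obtain i' j' t' where yi: "i' < j'" "j' < 3" "t' \<in> {0..1}" "y = p i' + of_real t' * (p j' - p i')"
      "(edge_restr p f i' j' has_real_derivative 0) (at t' within {0..1})" using y by blast
    have "\<not> good_point p f x" using ng[OF xi(1-4) deriv0_not_inf[OF xi(5) xi(3)]] .
    moreover have "\<not> good_point p f y" using ng[OF yi(1-4) deriv0_not_inf[OF yi(5) yi(3)]] .
    ultimately show "x = y" using P2 x y by blast
  qed
  show ?thesis using part1 P2 part3 by blast
qed


end
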